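(* Let $\mathcal F^{2R}$ be a 2-D Riemannian foliation of $\mathcal M$ satisfying $d(H^\flat)=-d(\tilde H^\flat)$. Let $(e_0,e_1,e_2,e_3)$ be a Riemannian foliation adapted frame on a starlike open set $U_p$ about $p\in\mathcal M$, and let $F_E=\tilde u\,e_0^\flat\wedge e_1^\flat$ be the associated electrically dominated force-free field on $U_p$ (with $d\ln|\tilde u|=2(H+\tilde H)^\flat$). Suppose the distribution spanned by $e_0$ and $e_1$ is involutive. Then $F_M:=\tilde u\,e_2^\flat\wedge e_3^\flat$ is a magnetically dominated force-free field on $U_p$ (with kernel spanned by $e_0,e_1$). Moreover both $F_E$ and $F_M$ are vacuum solutions, and $\star F_E=-F_M$, where $\star$ is the Hodge star for the orientation of $(e_0,e_1,e_2,e_3)$ in which $\star(e_0^\flat\wedge e_1^\flat)=-e_2^\flat\wedge e_3^\flat$.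
   Context: $(\mathcal M,g)$ is a 4-dimensional spacetime with metric of signature $(-,+,+,+)$ and Levi-Civita connection $\nabla$; $X^\flat$ is the metric dual 1-form of $X$. An electromagnetic field is a 2-form $F$ with $dF=0$; current density vector $j^\nu=-\nabla_\mu F^{\mu\nu}$; force-free means $F(j,\chi)=0$ for all $\chi$; magnetically (electrically) dominated means $F_{\mu\nu}F^{\mu\nu}>0$ ($<0$); vacuum means $j=0$. A 2-D Riemannian foliation is a foliation by 2-dimensional submanifolds with positive definite induced metric; a Riemannian foliation adapted frame is an orthonormal frame ($g(e_\mu,e_\nu)=\mathrm{diag}(-1,1,1,1)_{\mu\nu}$) with $e_2,e_3$ spanning the leaves' tangent spaces. $H,\tilde H$ are defined by $2H=[-g(\nabla_{e_0}e_0,e_2)+g(\nabla_{e_1}e_1,e_2)]e_2+[-g(\nabla_{e_0}e_0,e_3)+g(\nabla_{e_1}e_1,e_3)]e_3$, $2\tilde H=[-g(\nabla_{e_2}e_2,e_0)-g(\nabla_{e_3}e_3,e_0)]e_0+[g(\nabla_{e_2}e_2,e_1)+g(\nabla_{e_3}e_3,e_1)]e_1$. A starlike open set is star-shaped in some chart; a distribution is involutive if closed under Lie bracket. *)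

theory Defs
  imports "HOL-Analysis.Analysis"
begin

text \<open>Local coordinate model: the starlike open set U_p is taken inside a chart, i.e. a subset
of R^4 (coordinates indexed by the type 4). Tensor fields are given by their components in the
coordinate basis: vector fields and 1-forms are functions real^4 => real^4, 2-forms and the metric
are functions real^4 => real^4^4.\<close>

type_synonym vfield = "real^4 \<Rightarrow> real^4"
type_synonym tfield = "real^4 \<Rightarrow> real^4^4"

definition pd :: "4 \<Rightarrow> (real^4 \<Rightarrow> real) \<Rightarrow> real^4 \<Rightarrow> real" where
  "pd i f x = frechet_derivative f (at x) (axis i 1)"

fun pdl :: "4 list \<Rightarrow> (real^4 \<Rightarrow> real) \<Rightarrow> real^4 \<Rightarrow> real" where
  "pdl [] f = f"
| "pdl (i # is) f = pd i (pdl is f)"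

definition smooth4_on :: "(real^4) set \<Rightarrow> (real^4 \<Rightarrow> real) \<Rightarrow> bool" where
  "smooth4_on U f \<longleftrightarrow> (\<forall>is. pdl is f differentiable_on U)"

definition smooth_vf_on :: "(real^4) set \<Rightarrow> vfield \<Rightarrow> bool" where
  "smooth_vf_on U X \<longleftrightarrow> (\<forall>k. smooth4_on U (\<lambda>y. X y $ k))"

definition smooth_tf_on :: "(real^4) set \<Rightarrow> tfield \<Rightarrow> bool" where
  "smooth_tf_on U F \<longleftrightarrow> (\<forall>i j. smooth4_on U (\<lambda>y. F y $ i $ j))"

text \<open>Smooth symmetric metric on U (signature is enforced by the orthonormal frame below).\<close>
definition metric_on :: "(real^4) set \<Rightarrow> tfield \<Rightarrow> bool" where
  "metric_on U G \<longleftrightarrow> smooth_tf_on U G \<and> (\<forall>x\<in>U. \<forall>i j. G x $ i $ j = G x $ j $ i)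
      \<and> (\<forall>x\<in>U. det (G x) \<noteq> 0)"

definition gm :: "tfield \<Rightarrow> real^4 \<Rightarrow> real^4 \<Rightarrow> real^4 \<Rightarrow> real" where
  "gm G x X Y = (\<Sum>i\<in>UNIV. \<Sum>j\<in>UNIV. G x $ i $ j * X $ i * Y $ j)"

definition ginv :: "tfield \<Rightarrow> real^4 \<Rightarrow> real^4^4" where
  "ginv G x = matrix_inv (G x)"

definition christoffel :: "tfield \<Rightarrow> real^4 \<Rightarrow> 4 \<Rightarrow> 4 \<Rightarrow> 4 \<Rightarrow> real" where
  "christoffel G x k i j = (\<Sum>l\<in>UNIV. ginv G x $ k $ l *
      (pd i (\<lambda>y. G y $ j $ l) x + pd j (\<lambda>y. G y $ i $ l) x - pd l (\<lambda>y. G y $ i $ j) x)) / 2"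

definition cov :: "tfield \<Rightarrow> vfield \<Rightarrow> vfield \<Rightarrow> vfield" where
  "cov G X Y x = (\<chi> k. (\<Sum>i\<in>UNIV. X x $ i * pd i (\<lambda>y. Y y $ k) x)
      + (\<Sum>i\<in>UNIV. \<Sum>j\<in>UNIV. christoffel G x k i j * X x $ i * Y x $ j))"

definition flat :: "tfield \<Rightarrow> vfield \<Rightarrow> vfield" where
  "flat G X x = (\<chi> i. \<Sum>j\<in>UNIV. G x $ i $ j * X x $ j)"

definition lie :: "vfield \<Rightarrow> vfield \<Rightarrow> vfield" where
  "lie X Y x = (\<chi> k. \<Sum>i\<in>UNIV. X x $ i * pd i (\<lambda>y. Y y $ k) x - Y x $ i * pd i (\<lambda>y. X y $ k) x)"

definition wedge :: "vfield \<Rightarrow> vfield \<Rightarrow> tfield" where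
  "wedge a b x = (\<chi> i j. a x $ i * b x $ j - a x $ j * b x $ i)"

definition d1 :: "vfield \<Rightarrow> tfield" where
  "d1 a x = (\<chi> i j. pd i (\<lambda>y. a y $ j) x - pd j (\<lambda>y. a y $ i) x)"

definition closed2_on :: "(real^4) set \<Rightarrow> tfield \<Rightarrow> bool" where
  "closed2_on U F \<longleftrightarrow> (\<forall>x\<in>U. \<forall>i j k. pd i (\<lambda>y. F y $ j $ k) x + pd j (\<lambda>y. F y $ k $ i) x
      + pd k (\<lambda>y. F y $ i $ j) x = 0)"

definition em_field_on :: "(real^4) set \<Rightarrow> tfield \<Rightarrow> bool" where
  "em_field_on U F \<longleftrightarrow> smooth_tf_on U F \<and> (\<forall>x\<in>U. \<forall>i j. F x $ i $ j = - F x $ j $ i)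
      \<and> closed2_on U F"

definition raise2 :: "tfield \<Rightarrow> tfield \<Rightarrow> tfield" where
  "raise2 G F x = (\<chi> m n. \<Sum>a\<in>UNIV. \<Sum>b\<in>UNIV. ginv G x $ m $ a * ginv G x $ n $ b * F x $ a $ b)"

definition current :: "tfield \<Rightarrow> tfield \<Rightarrow> vfield" where
  "current G F x = (\<chi> n. - ((\<Sum>m\<in>UNIV. pd m (\<lambda>y. raise2 G F y $ m $ n) x)
      + (\<Sum>m\<in>UNIV. \<Sum>l\<in>UNIV. christoffel G x m m l * raise2 G F x $ l $ n)
      + (\<Sum>m\<in>UNIV. \<Sum>l\<in>UNIV. christoffel G x n m l * raise2 G F x $ m $ l)))"

definition form2 :: "tfield \<Rightarrow> real^4 \<Rightarrow> real^4 \<Rightarrow> real^4 \<Rightarrow> real" where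
  "form2 F x X Y = (\<Sum>i\<in>UNIV. \<Sum>j\<in>UNIV. F x $ i $ j * X $ i * Y $ j)"

definition force_free_on :: "tfield \<Rightarrow> (real^4) set \<Rightarrow> tfield \<Rightarrow> bool" where
  "force_free_on G U F \<longleftrightarrow> (\<forall>x\<in>U. \<forall>Z. form2 F x (current G F x) Z = 0)"

definition inv_sq :: "tfield \<Rightarrow> tfield \<Rightarrow> real^4 \<Rightarrow> real" where
  "inv_sq G F x = (\<Sum>m\<in>UNIV. \<Sum>n\<in>UNIV. F x $ m $ n * raise2 G F x $ m $ n)"

definition magnetically_dominated_on :: "tfield \<Rightarrow> (real^4) set \<Rightarrow> tfield \<Rightarrow> bool" where
  "magnetically_dominated_on G U F \<longleftrightarrow> (\<forall>x\<in>U. inv_sq G F x > 0)"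

definition electrically_dominated_on :: "tfield \<Rightarrow> (real^4) set \<Rightarrow> tfield \<Rightarrow> bool" where
  "electrically_dominated_on G U F \<longleftrightarrow> (\<forall>x\<in>U. inv_sq G F x < 0)"

definition vacuum_on :: "tfield \<Rightarrow> (real^4) set \<Rightarrow> tfield \<Rightarrow> bool" where
  "vacuum_on G U F \<longleftrightarrow> (\<forall>x\<in>U. current G F x = 0)"

definition orthonormal_frame_on :: "tfield \<Rightarrow> (real^4) set \<Rightarrow> (nat \<Rightarrow> vfield) \<Rightarrow> bool" where
  "orthonormal_frame_on G U e \<longleftrightarrow> (\<forall>\<mu><4. smooth_vf_on U (e \<mu>))
     \<and> (\<forall>x\<in>U. \<forall>\<mu><4. \<forall>\<nu><4. gm G x (e \<mu> x) (e \<nu> x)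
            = (if \<mu> = \<nu> then (if \<mu> = 0 then -1 else 1) else 0))"

definition involutive2_on :: "(real^4) set \<Rightarrow> vfield \<Rightarrow> vfield \<Rightarrow> bool" where
  "involutive2_on U X Y \<longleftrightarrow> (\<forall>x\<in>U. lie X Y x \<in> span {X x, Y x})"

text \<open>Frame adapted to a 2-D Riemannian foliation on U: orthonormal frame whose spacelike
vectors e_2, e_3 span an integrable (involutive, by Frobenius = tangent to the leaves of a
foliation) distribution.\<close>
definition riem_fol_adapted_frame_on :: "tfield \<Rightarrow> (real^4) set \<Rightarrow> (nat \<Rightarrow> vfield) \<Rightarrow> bool" where
  "riem_fol_adapted_frame_on G U e \<longleftrightarrow> orthonormal_frame_on G U e \<and> involutive2_on U (e 2) (e 3)"

definition Hvec :: "tfield \<Rightarrow> (nat \<Rightarrow> vfield) \<Rightarrow> vfield" where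
  "Hvec G e x = (1/2) *\<^sub>R
     ((- gm G x (cov G (e 0) (e 0) x) (e 2 x) + gm G x (cov G (e 1) (e 1) x) (e 2 x)) *\<^sub>R e 2 x
    + (- gm G x (cov G (e 0) (e 0) x) (e 3 x) + gm G x (cov G (e 1) (e 1) x) (e 3 x)) *\<^sub>R e 3 x)"

definition Htvec :: "tfield \<Rightarrow> (nat \<Rightarrow> vfield) \<Rightarrow> vfield" where
  "Htvec G e x = (1/2) *\<^sub>R
     ((- gm G x (cov G (e 2) (e 2) x) (e 0 x) - gm G x (cov G (e 3) (e 3) x) (e 0 x)) *\<^sub>R e 0 x
    + (gm G x (cov G (e 2) (e 2) x) (e 1 x) + gm G x (cov G (e 3) (e 3) x) (e 1 x)) *\<^sub>R e 1 x)"

text \<open>Levi-Civita symbol (coordinate orientation) and Hodge star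
(star F)_{mn} = 1/2 s sqrt|det g| eps_{mnrt} F^{rt}, with orientation sign s.\<close>
definition levi :: "4 \<Rightarrow> 4 \<Rightarrow> 4 \<Rightarrow> 4 \<Rightarrow> real" where
  "levi a b c d = det (vector [axis a 1, axis b 1, axis c 1, axis d 1] :: real^4^4)"

definition hodge :: "tfield \<Rightarrow> real \<Rightarrow> tfield \<Rightarrow> tfield" where
  "hodge G s F x = (\<chi> m n. (\<Sum>r\<in>UNIV. \<Sum>t\<in>UNIV.
      s * sqrt \<bar>det (G x)\<bar> * levi m n r t * raise2 G F x $ r $ t) / 2)"

end

theory Submission
  imports Defs
begin

lemma pd_cong:
  assumes "open U" "x \<in> U" "\<And>y. y \<in> U \<Longrightarrow> f y = g y"
  shows "pd i f x = pd i g x"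
proof -
  have "\<And>f'. (f has_derivative f') (at x) \<longleftrightarrow> (g has_derivative f') (at x)"
    using has_derivative_transform_within_open[OF _ assms(1,2)] assms(3) by metis
  then have "frechet_derivative f (at x) = frechet_derivative g (at x)"
    unfolding frechet_derivative_def by simp
  then show ?thesis unfolding pd_def by simp
qed

lemma pd_has:
  assumes "(f has_derivative f') (at x)" shows "pd i f x = f' (axis i 1)"
  using frechet_derivative_at[OF assms] unfolding pd_def by simp

lemma pd_const[simp]: "pd i (\<lambda>y. c) x = 0"
  using pd_has[OF has_derivative_const] by simp

lemma pd_add:
  assumes "f differentiable at x" "g differentiable at x"
  shows "pd i (\<lambda>y. f y + g y) x = pd i f x + pd i g x"
proof -
  from assms have a: "(f has_derivative frechet_derivative f (at x)) (at x)"
    "(g has_derivative frechet_derivative g (at x)) (at x)"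
    by (auto simp: frechet_derivative_works)
  show ?thesis using pd_has[OF has_derivative_add[OF a]] unfolding pd_def by simp
qed

lemma pd_diff:
  assumes "f differentiable at x" "g differentiable at x"
  shows "pd i (\<lambda>y. f y - g y) x = pd i f x - pd i g x"
proof -
  from assms have a: "(f has_derivative frechet_derivative f (at x)) (at x)"
    "(g has_derivative frechet_derivative g (at x)) (at x)"
    by (auto simp: frechet_derivative_works)
  show ?thesis using pd_has[OF has_derivative_diff[OF a]] unfolding pd_def by simp
qed

lemma pd_mult:
  assumes "f differentiable at x" "g differentiable at x"
  shows "pd i (\<lambda>y. f y * g y) x = pd i f x * g x + f x * pd i g x"
proof -
  from assms have a: "(f has_derivative frechet_derivative f (at x)) (at x)"
    "(g has_derivative frechet_derivative g (at x)) (at x)"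
    by (auto simp: frechet_derivative_works)
  show ?thesis using pd_has[OF has_derivative_mult[OF a]] unfolding pd_def by simp
qed

lemma pd_sum:
  assumes "finite S" "\<And>k. k \<in> S \<Longrightarrow> f k differentiable at x"
  shows "pd i (\<lambda>y. \<Sum>k\<in>S. f k y) x = (\<Sum>k\<in>S. pd i (f k) x)"
proof -
  from assms have a: "\<And>k. k \<in> S \<Longrightarrow> (f k has_derivative frechet_derivative (f k) (at x)) (at x)"
    by (auto simp: frechet_derivative_works)
  show ?thesis using pd_has[OF has_derivative_sum[of S f "\<lambda>k. frechet_derivative (f k) (at x)", OF a]] unfolding pd_def by simp
qed

lemma pd_ln_abs:
  assumes "f differentiable at x" "f x \<noteq> 0"
  shows "pd i (\<lambda>y. ln \<bar>f y\<bar>) x = pd i f x / f x"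
proof -
  from assms have a: "(f has_derivative frechet_derivative f (at x)) (at x)"
    by (auto simp: frechet_derivative_works)
  have D: "DERIV (\<lambda>t. ln \<bar>t\<bar>) (f x) :> 1 / f x"
  proof (cases "f x > 0")
    case True
    have d: "DERIV ln (f x) :> 1 / f x" using True by (rule DERIV_ln_divide)
    have o: "open {0::real<..}" by simp
    have m: "f x \<in> {0<..}" using True by simp
    have e: "\<And>t. t \<in> {0::real<..} \<Longrightarrow> ln t = ln \<bar>t\<bar>" by simp
    show ?thesis by (rule has_field_derivative_transform_within_open[OF d o m e])
  next
    case False
    hence n: "f x < 0" using assms(2) by simp
    have d1: "DERIV ln (- f x) :> 1 / (- f x)" using n by (intro DERIV_ln_divide) simp
    have d2: "DERIV (\<lambda>t. - t) (f x) :> - 1" using DERIV_minus[OF DERIV_ident] by blast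
    have d3: "DERIV (\<lambda>t. ln (- t)) (f x) :> (1 / (- f x)) * (- 1)"
      using DERIV_chain2[OF d1 d2] by blast
    have d: "DERIV (\<lambda>t. ln (- t)) (f x) :> 1 / f x" using d3 by simp
    have o: "open {..<0::real}" by simp
    have m: "f x \<in> {..<0}" using n by simp
    have e: "\<And>t. t \<in> {..<0::real} \<Longrightarrow> ln (- t) = ln \<bar>t\<bar>" by simp
    show ?thesis by (rule has_field_derivative_transform_within_open[OF d o m e])
  qed
  hence l: "((\<lambda>t. ln \<bar>t\<bar>) has_derivative (*) (1 / f x)) (at (f x))"
    unfolding has_field_derivative_def .
  have "((\<lambda>y. ln \<bar>f y\<bar>) has_derivative (\<lambda>h. (1 / f x) * frechet_derivative f (at x) h)) (at x)"
    using has_derivative_compose[OF a l] by (simp add: o_def)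
  from pd_has[OF this, of i]
  show ?thesis unfolding pd_def by simp
qed

lemma pdl_append: "pdl (is @ [i]) f = pdl is (pd i f)"
  by (induction "is") auto

lemma smooth_pd: "smooth4_on U f \<Longrightarrow> smooth4_on U (pd i f)"
  unfolding smooth4_on_def by (metis pdl_append)

lemma smooth_diff_at: "smooth4_on U f \<Longrightarrow> open U \<Longrightarrow> x \<in> U \<Longrightarrow> f differentiable at x"
proof -
  assume "smooth4_on U f" "open U" "x \<in> U"
  then have "pdl [] f differentiable_on U" unfolding smooth4_on_def by blast
  then have "f differentiable_on U" by simp
  then show ?thesis using differentiable_on_eq_differentiable_at[OF \<open>open U\<close>] \<open>x \<in> U\<close> by blast
qed

lemma pdl_cong:
  assumes "open U" "\<And>y. y \<in> U \<Longrightarrow> f y = g y"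
  shows "y \<in> U \<Longrightarrow> pdl is f y = pdl is g y"
proof (induction "is" arbitrary: y)
  case Nil then show ?case using assms by simp
next
  case (Cons i "is")
  have "pd i (pdl is f) y = pd i (pdl is g) y"
    by (rule pd_cong[OF assms(1) Cons.prems]) (rule Cons.IH)
  then show ?case by simp
qed

lemma diff_on_cong:
  assumes "open U" "\<And>y. y \<in> U \<Longrightarrow> f y = g y" "f differentiable_on U"
  shows "g differentiable_on U"
  unfolding differentiable_on_eq_differentiable_at[OF assms(1)]
proof
  fix x assume x: "x \<in> U"
  then have "f differentiable at x" using assms(3) differentiable_on_eq_differentiable_at[OF assms(1)] by blast
  then obtain f' where "(f has_derivative f') (at x)" unfolding differentiable_def by blast
  then have "(g has_derivative f') (at x)" using has_derivative_transform_within_open[OF _ assms(1) x] assms(2) by blast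
  then show "g differentiable at x" unfolding differentiable_def by blast
qed

lemma smooth_cong:
  assumes "open U" "\<And>y. y \<in> U \<Longrightarrow> f y = g y" "smooth4_on U f"
  shows "smooth4_on U g"
  unfolding smooth4_on_def
proof
  fix "is"
  have d: "pdl is f differentiable_on U" using assms(3) unfolding smooth4_on_def by blast
  have eq: "\<And>y. y \<in> U \<Longrightarrow> pdl is f y = pdl is g y"
    by (rule pdl_cong[where f=f and g=g, OF assms(1) assms(2)])
  show "pdl is g differentiable_on U" using diff_on_cong[OF assms(1) eq d] .
qed

definition sm_upto :: "nat \<Rightarrow> (real^4) set \<Rightarrow> (real^4 \<Rightarrow> real) \<Rightarrow> bool" where
  "sm_upto n U f \<longleftrightarrow> (\<forall>is. length is \<le> n \<longrightarrow> pdl is f differentiable_on U)"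

lemma sm_upto_smooth: "smooth4_on U f \<longleftrightarrow> (\<forall>n. sm_upto n U f)"
  unfolding smooth4_on_def sm_upto_def by auto

lemma sm_upto_add:
  assumes "open U" "sm_upto n U f" "sm_upto n U g"
  shows "length is \<le> n \<Longrightarrow> y \<in> U \<Longrightarrow> pdl is (\<lambda>y. f y + g y) y = pdl is f y + pdl is g y"
proof (induction "is" arbitrary: y)
  case Nil then show ?case by simp
next
  case (Cons i "is")
  have l: "length is \<le> n" using Cons.prems by simp
  have df: "pdl is f differentiable at y" "pdl is g differentiable at y"
    using assms l Cons.prems(2) differentiable_on_eq_differentiable_at[OF assms(1)] unfolding sm_upto_def by blast+
  have "pdl (i # is) (\<lambda>y. f y + g y) y = pd i (\<lambda>z. pdl is f z + pdl is g z) y"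
    using pd_cong[OF assms(1) Cons.prems(2), of "pdl is (\<lambda>y. f y + g y)"] Cons.IH[OF l] by simp
  also have "\<dots> = pdl (i # is) f y + pdl (i # is) g y" using pd_add[OF df] by simp
  finally show ?case .
qed

lemma sm_upto_add_sm:
  assumes "open U" "sm_upto n U f" "sm_upto n U g"
  shows "sm_upto n U (\<lambda>y. f y + g y)"
  unfolding sm_upto_def
proof (intro allI impI)
  fix "is" :: "4 list" assume l: "length is \<le> n"
  have d: "(\<lambda>y. pdl is f y + pdl is g y) differentiable_on U"
    using assms l unfolding sm_upto_def by (intro differentiable_on_add) auto
  have eq: "\<And>y. y \<in> U \<Longrightarrow> pdl is f y + pdl is g y = pdl is (\<lambda>y. f y + g y) y"
    using sm_upto_add[OF assms l] by simp
  show "pdl is (\<lambda>y. f y + g y) differentiable_on U" using diff_on_cong[OF assms(1) eq d] .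
qed

lemma sm_upto_mono: "sm_upto n U f \<Longrightarrow> m \<le> n \<Longrightarrow> sm_upto m U f"
  unfolding sm_upto_def by auto

lemma sm_mult_upto:
  assumes "open U"
  shows "\<forall>f g. smooth4_on U f \<longrightarrow> smooth4_on U g \<longrightarrow> sm_upto n U (\<lambda>y. f y * g y)"
proof (induction n)
  case 0
  show ?case unfolding sm_upto_def smooth4_on_def
  proof (intro allI impI)
    fix f g "is" assume a: "\<forall>is. pdl is f differentiable_on U" "\<forall>is. pdl is g differentiable_on U" "length (is::4 list) \<le> 0"
    then have "is = []" by simp
    moreover have "f differentiable_on U" "g differentiable_on U" using a(1,2) spec[of _ "[]"] by (metis pdl.simps(1))+
    ultimately show "pdl is (\<lambda>y. f y * g y) differentiable_on U" by (simp add: differentiable_on_mult)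
  qed
next
  case (Suc n)
  show ?case
  proof (intro allI impI)
    fix f g assume sf: "smooth4_on U f" and sg: "smooth4_on U g"
    show "sm_upto (Suc n) U (\<lambda>y. f y * g y)"
      unfolding sm_upto_def
    proof (intro allI impI)
      fix "is" :: "4 list" assume l: "length is \<le> Suc n"
      show "pdl is (\<lambda>y. f y * g y) differentiable_on U"
      proof (cases "length is \<le> n")
        case True then show ?thesis using Suc.IH sf sg unfolding sm_upto_def by blast
      next
        case False
        then have "is \<noteq> []" by auto
        then obtain js i where js: "is = js @ [i]" by (metis rev_exhaust)
        then have lj: "length js \<le> n" using l by simp
        have s1: "sm_upto n U (\<lambda>y. pd i f y * g y)" using Suc.IH smooth_pd[OF sf] sg by blast
        have s2: "sm_upto n U (\<lambda>y. f y * pd i g y)" using Suc.IH smooth_pd[OF sg] sf by blast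
        have eq1: "\<And>y. y \<in> U \<Longrightarrow> pd i (\<lambda>y. f y * g y) y = pd i f y * g y + f y * pd i g y"
          using pd_mult smooth_diff_at[OF sf assms] smooth_diff_at[OF sg assms] by blast
        have d: "pdl js (\<lambda>y. pd i f y * g y + f y * pd i g y) differentiable_on U"
          using sm_upto_add_sm[OF assms s1 s2] lj unfolding sm_upto_def by blast
        have eq: "\<And>y. y \<in> U \<Longrightarrow> pdl js (\<lambda>y. pd i f y * g y + f y * pd i g y) y = pdl js (pd i (\<lambda>y. f y * g y)) y"
          by (rule pdl_cong[where f="\<lambda>y. pd i f y * g y + f y * pd i g y" and g="pd i (\<lambda>y. f y * g y)", OF assms eq1[symmetric]])
        have "pdl js (pd i (\<lambda>y. f y * g y)) differentiable_on U" using diff_on_cong[OF assms eq d] .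
        then show ?thesis unfolding js pdl_append .
      qed
    qed
  qed
qed

lemma smooth_mult: "open U \<Longrightarrow> smooth4_on U f \<Longrightarrow> smooth4_on U g \<Longrightarrow> smooth4_on U (\<lambda>y. f y * g y)"
  unfolding sm_upto_smooth[of U "\<lambda>y. f y * g y"] using sm_mult_upto[of U] by blast

lemma smooth_add: "open U \<Longrightarrow> smooth4_on U f \<Longrightarrow> smooth4_on U g \<Longrightarrow> smooth4_on U (\<lambda>y. f y + g y)"
  unfolding sm_upto_smooth[of U "\<lambda>y. f y + g y"] sm_upto_smooth[of U f] sm_upto_smooth[of U g]
  using sm_upto_add_sm[of U _ f g] by blast

lemma smooth_const: "smooth4_on U (\<lambda>y. c)"
proof -
  have "\<And>is. pdl is (\<lambda>y. c) = (\<lambda>y. if is = [] then c else 0)"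
  proof -
    fix "is" :: "4 list" show "pdl is (\<lambda>y. c) = (\<lambda>y. if is = [] then c else 0)"
      by (induction "is") auto
  qed
  then show ?thesis unfolding smooth4_on_def by simp
qed

lemma smooth_minus: "open U \<Longrightarrow> smooth4_on U f \<Longrightarrow> smooth4_on U (\<lambda>y. - f y)"
  using smooth_mult[OF _ smooth_const[of U "-1"], of f] by simp

lemma smooth_diff: "open U \<Longrightarrow> smooth4_on U f \<Longrightarrow> smooth4_on U g \<Longrightarrow> smooth4_on U (\<lambda>y. f y - g y)"
  using smooth_add[OF _ _ smooth_minus, of U f g] by simp

lemma smooth_sum:
  assumes "open U" "finite S" "\<And>k. k \<in> S \<Longrightarrow> smooth4_on U (f k)"
  shows "smooth4_on U (\<lambda>y. \<Sum>k\<in>S. f k y)"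
  using assms(2,3)
proof (induction S rule: finite_induct)
  case empty then show ?case using smooth_const by simp
next
  case (insert a S)
  have "smooth4_on U (\<lambda>y. f a y + (\<Sum>k\<in>S. f k y))"
    using smooth_add[OF assms(1), of "f a" "\<lambda>y. \<Sum>k\<in>S. f k y"] insert by simp
  then show ?case using insert by simp
qed



lemma inv_comp:
  fixes A :: "real^4^4"
  assumes "det A \<noteq> 0"
  shows "A ** matrix_inv A = mat 1" "matrix_inv A ** A = mat 1"
proof -
  have "invertible A" using assms invertible_det_nz by blast
  then have "\<exists>A'. A ** A' = mat 1 \<and> A' ** A = mat 1" unfolding invertible_def by blast
  then have "A ** matrix_inv A = mat 1 \<and> matrix_inv A ** A = mat 1"
    unfolding matrix_inv_def by (rule someI_ex)
  then show "A ** matrix_inv A = mat 1" "matrix_inv A ** A = mat 1" by auto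
qed

lemma inv_comp_comp:
  fixes A :: "real^4^4"
  assumes "det A \<noteq> 0"
  shows "(\<Sum>k\<in>UNIV. A $ i $ k * matrix_inv A $ k $ j) = (if i = j then 1 else 0)"
    "(\<Sum>k\<in>UNIV. matrix_inv A $ i $ k * A $ k $ j) = (if i = j then 1 else 0)"
proof -
  have "(A ** matrix_inv A) $ i $ j = mat 1 $ i $ j" "(matrix_inv A ** A) $ i $ j = mat 1 $ i $ j"
    using inv_comp[OF assms] by simp_all
  then show "(\<Sum>k\<in>UNIV. A $ i $ k * matrix_inv A $ k $ j) = (if i = j then 1 else 0)"
    "(\<Sum>k\<in>UNIV. matrix_inv A $ i $ k * A $ k $ j) = (if i = j then 1 else 0)"
    by (simp_all add: matrix_matrix_mult_def mat_def)
qed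

lemma sum_delta_mult: "(\<Sum>m\<in>(UNIV::4 set). (if l = m then 1 else 0) * (c m::real)) = c l"
  by (simp add: if_distrib[of "\<lambda>t. t * _"] cong: if_cong)

lemma sum_lt4: "(\<Sum>a<(4::nat). h a) = h 0 + h 1 + h 2 + h 3"
  by (simp add: eval_nat_numeral)

lemma lt4_cases: "(b::nat) < 4 \<Longrightarrow> b = 0 \<or> b = 1 \<or> b = 2 \<or> b = 3"
  by auto

lemma gm_inner: "gm G x v w = v \<bullet> (G x *v w)"
  unfolding gm_def inner_vec_def matrix_vector_mult_def
  by (simp add: sum_distrib_left mult.assoc mult.left_commute)

locale pt =
  fixes G :: tfield and U :: "(real^4) set" and e :: "nat \<Rightarrow> vfield" and x :: "real^4"
  assumes op: "open U" and xU: "x \<in> U" and met: "metric_on U G"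
    and fr: "orthonormal_frame_on G U e"
begin

lemma Gsym: "y \<in> U \<Longrightarrow> G y $ i $ j = G y $ j $ i"
  using met unfolding metric_on_def by blast

lemma Gsymx: "G x $ i $ j = G x $ j $ i" using Gsym xU by blast

lemma detG: "y \<in> U \<Longrightarrow> det (G y) \<noteq> 0"
  using met unfolding metric_on_def by blast

lemma Gsmooth: "smooth4_on U (\<lambda>y. G y $ i $ j)"
  using met unfolding metric_on_def smooth_tf_on_def by blast

lemma Gdiff: "(\<lambda>y. G y $ i $ j) differentiable at x"
  using smooth_diff_at[OF Gsmooth op xU] .

lemma esmooth: "a < 4 \<Longrightarrow> smooth4_on U (\<lambda>y. e a y $ k)"
  using fr unfolding orthonormal_frame_on_def smooth_vf_on_def by blast

lemma ediff: "a < 4 \<Longrightarrow> (\<lambda>y. e a y $ k) differentiable at x"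
  using smooth_diff_at[OF esmooth op xU] .

lemma orth_y: "y \<in> U \<Longrightarrow> a < 4 \<Longrightarrow> b < 4 \<Longrightarrow> gm G y (e a y) (e b y) = (if a = b then (if a = 0 then -1 else 1) else 0)"
  using fr unfolding orthonormal_frame_on_def by blast

lemma orth: "a < 4 \<Longrightarrow> b < 4 \<Longrightarrow> gm G x (e a x) (e b x) = (if a = b then (if a = 0 then -1 else 1) else 0)"
  using orth_y xU by blast

lemma dGsym: "pd k (\<lambda>y. G y $ i $ j) x = pd k (\<lambda>y. G y $ j $ i) x"
  by (rule pd_cong[OF op xU]) (rule Gsym)

lemma inv1: "(\<Sum>k\<in>UNIV. G x $ i $ k * ginv G x $ k $ j) = (if i = j then 1 else 0)"
  unfolding ginv_def using inv_comp_comp(1)[OF detG[OF xU]] .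

lemma inv2: "y \<in> U \<Longrightarrow> (\<Sum>k\<in>UNIV. ginv G y $ i $ k * G y $ k $ j) = (if i = j then 1 else 0)"
  unfolding ginv_def using inv_comp_comp(2)[OF detG] by blast

lemma gm_sym: "gm G x v w = gm G x w v"
  unfolding gm_def by (subst sum.swap) (simp add: Gsymx mult_ac)

lemma gm_add_left: "gm G x (v + v') w = gm G x v w + gm G x v' w"
  by (simp add: gm_inner inner_add_left)
lemma gm_scale_left: "gm G x (c *\<^sub>R v) w = c * gm G x v w"
  by (simp add: gm_inner)
lemma gm_sum_left: "gm G x (\<Sum>a\<in>S. f a) w = (\<Sum>a\<in>S. gm G x (f a) w)"
  by (simp add: gm_inner inner_sum_left)
lemma gm_add_right: "gm G x w (v + v') = gm G x w v + gm G x w v'"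
  using gm_add_left gm_sym by metis
lemma gm_scale_right: "gm G x w (c *\<^sub>R v) = c * gm G x w v"
  using gm_scale_left gm_sym by metis
lemma gm_zero_left[simp]: "gm G x 0 w = 0"
  by (simp add: gm_inner)
lemma gm_zero_right[simp]: "gm G x w 0 = 0"
  using gm_zero_left gm_sym by metis

definition eps :: "nat \<Rightarrow> real" where "eps a = (if a = 0 then -1 else 1)"

lemma inj_E: "inj_on (\<lambda>a. e a x) {..<4}"
proof (rule inj_onI)
  fix a b assume a: "a \<in> {..<(4::nat)}" and b: "b \<in> {..<(4::nat)}" and eq: "e a x = e b x"
  show "a = b"
  proof (rule ccontr)
    assume "a \<noteq> b"
    then have "gm G x (e a x) (e b x) = 0" using orth a b by simp
    moreover have "gm G x (e a x) (e a x) \<noteq> 0" using orth a by simp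
    ultimately show False using eq by simp
  qed
qed

lemma indep_E: "independent ((\<lambda>a. e a x) ` {..<4})"
proof (rule independent_if_scalars_zero)
  show "finite ((\<lambda>a. e a x) ` {..<4})" by simp
  fix f v assume s: "(\<Sum>w\<in>(\<lambda>a. e a x) ` {..<4}. f w *\<^sub>R w) = 0" and v: "v \<in> (\<lambda>a. e a x) ` {..<4}"
  from v obtain b where b: "b < 4" "v = e b x" by auto
  have s2: "(\<Sum>a<4. f (e a x) *\<^sub>R e a x) = 0"
    using s sum.reindex[OF inj_E, of "\<lambda>w. f w *\<^sub>R w"] by simp
  have "0 = gm G x (\<Sum>a<4. f (e a x) *\<^sub>R e a x) (e b x)" using s2 by simp
  also have "\<dots> = (\<Sum>a<4. f (e a x) * gm G x (e a x) (e b x))"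
    by (simp add: gm_sum_left gm_scale_left)
  also have "\<dots> = f (e b x) * eps b"
    using b(1) unfolding sum_lt4 eps_def
    using lt4_cases[of b] by (auto simp: orth)
  finally show "f v = 0" using b unfolding eps_def by (auto split: if_splits)
qed

lemma span_E: "v \<in> span ((\<lambda>a. e a x) ` {..<4})"
proof -
  have c: "card ((\<lambda>a. e a x) ` {..<4}) = 4" using card_image[OF inj_E] by simp
  have "dim (UNIV :: (real^4) set) \<le> card ((\<lambda>a. e a x) ` {..<4})" using c by simp
  from card_ge_dim_independent[OF _ indep_E this] show ?thesis by blast
qed

lemma complete: "v = (\<Sum>a<4. (eps a * gm G x v (e a x)) *\<^sub>R e a x)"
proof -
  obtain c where c: "v = (\<Sum>w\<in>(\<lambda>a. e a x) ` {..<4}. c w *\<^sub>R w)"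
    using span_E[of v] unfolding span_finite[OF finite_imageI[OF finite_lessThan]] by blast
  then have c2: "v = (\<Sum>a<4. c (e a x) *\<^sub>R e a x)"
    using sum.reindex[OF inj_E, of "\<lambda>w. c w *\<^sub>R w"] by simp
  have co: "\<And>b. b < 4 \<Longrightarrow> gm G x v (e b x) = c (e b x) * eps b"
  proof -
    fix b :: nat assume b: "b < 4"
    have "gm G x v (e b x) = (\<Sum>a<4. c (e a x) * gm G x (e a x) (e b x))"
      by (subst c2) (simp add: gm_sum_left gm_scale_left)
    also have "\<dots> = c (e b x) * eps b"
      using b unfolding sum_lt4 eps_def
      using lt4_cases[of b] by (auto simp: orth)
    finally show "gm G x v (e b x) = c (e b x) * eps b" .
  qed
  have "\<And>a. a < 4 \<Longrightarrow> c (e a x) = eps a * gm G x v (e a x)"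
    using co unfolding eps_def by auto
  then have "(\<Sum>a<4. c (e a x) *\<^sub>R e a x) = (\<Sum>a<4. (eps a * gm G x v (e a x)) *\<^sub>R e a x)"
    by (intro sum.cong) auto
  then show ?thesis using c2 by metis
qed

lemma basis_zero:
  assumes "\<forall>a<4. (\<Sum>i\<in>UNIV. s i * e a x $ i) = 0"
  shows "s i = 0"
proof -
  define sv :: "real^4" where "sv = (\<chi> i. s i)"
  have z: "\<And>a. a < 4 \<Longrightarrow> sv \<bullet> e a x = 0"
    using assms unfolding sv_def inner_vec_def by simp
  have "sv \<bullet> sv = sv \<bullet> (\<Sum>a<4. (eps a * gm G x sv (e a x)) *\<^sub>R e a x)"
    using complete[of sv] by simp
  also have "\<dots> = 0" by (simp add: inner_sum_right z)
  finally have "sv = 0" by simp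
  then show ?thesis unfolding sv_def by (metis vec_lambda_beta zero_index)
qed

definition dG :: "4 \<Rightarrow> 4 \<Rightarrow> 4 \<Rightarrow> real" where
  "dG i j k = pd i (\<lambda>y. G y $ j $ k) x"

definition GL :: "4 \<Rightarrow> 4 \<Rightarrow> 4 \<Rightarrow> real" where
  "GL k i j = (\<Sum>m\<in>UNIV. G x $ k $ m * christoffel G x m i j)"

lemma dG_sym: "dG i j k = dG i k j" unfolding dG_def using dGsym .

lemma GL_eq: "GL l i j = (dG i j l + dG j i l - dG l i j) / 2"
proof -
  define c where "c m = pd i (\<lambda>y. G y $ j $ m) x + pd j (\<lambda>y. G y $ i $ m) x - pd m (\<lambda>y. G y $ i $ j) x" for m
  have "GL l i j = (\<Sum>k\<in>UNIV. G x $ l $ k * ((\<Sum>m\<in>UNIV. ginv G x $ k $ m * c m) / 2))"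
    unfolding GL_def christoffel_def c_def by simp
  also have "\<dots> = (\<Sum>k\<in>UNIV. \<Sum>m\<in>UNIV. G x $ l $ k * ginv G x $ k $ m * c m) / 2"
    by (simp add: sum_distrib_left sum_divide_distrib mult.assoc)
  also have "\<dots> = (\<Sum>m\<in>UNIV. \<Sum>k\<in>UNIV. G x $ l $ k * ginv G x $ k $ m * c m) / 2"
    by (subst sum.swap) simp
  also have "\<dots> = (\<Sum>m\<in>UNIV. (\<Sum>k\<in>UNIV. G x $ l $ k * ginv G x $ k $ m) * c m) / 2"
    by (simp add: sum_distrib_right)
  also have "\<dots> = c l / 2" by (simp add: inv1 sum_delta_mult)
  finally show ?thesis unfolding c_def dG_def by simp
qed

lemma chr_sym: "christoffel G x k i j = christoffel G x k j i"
  unfolding christoffel_def using dGsym by (simp add: algebra_simps)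

lemma cov_comp: "cov G X Y x $ k = (\<Sum>i\<in>UNIV. X x $ i * pd i (\<lambda>y. Y y $ k) x)
   + (\<Sum>i\<in>UNIV. \<Sum>j\<in>UNIV. christoffel G x k i j * X x $ i * Y x $ j)"
  unfolding cov_def by simp

lemma swap_in3: "(\<Sum>a\<in>A. \<Sum>b\<in>B. \<Sum>c\<in>C. f a b c) = (\<Sum>a\<in>A. \<Sum>c\<in>C. \<Sum>b\<in>B. f a b c)"
  by (rule sum.cong[OF refl], rule sum.swap)

lemma cov_gm: "gm G x (cov G X Y x) W =
   (\<Sum>i\<in>UNIV. \<Sum>j\<in>UNIV. \<Sum>k\<in>UNIV. X x $ i * G x $ j $ k * pd i (\<lambda>y. Y y $ j) x * W $ k)
 + (\<Sum>i\<in>UNIV. \<Sum>j\<in>UNIV. \<Sum>k\<in>UNIV. X x $ i * Y x $ j * W $ k * GL k i j)"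
proof -
  have "gm G x (cov G X Y x) W = (\<Sum>j\<in>UNIV. \<Sum>k\<in>UNIV. G x $ j $ k *
      ((\<Sum>i\<in>UNIV. X x $ i * pd i (\<lambda>y. Y y $ j) x)
     + (\<Sum>i\<in>UNIV. \<Sum>l\<in>UNIV. christoffel G x j i l * X x $ i * Y x $ l)) * W $ k)"
    unfolding gm_def cov_comp by (simp add: mult.commute mult.left_commute)
  also have "\<dots> = (\<Sum>j\<in>UNIV. \<Sum>k\<in>UNIV. \<Sum>i\<in>UNIV. X x $ i * G x $ j $ k * pd i (\<lambda>y. Y y $ j) x * W $ k)
     + (\<Sum>j\<in>UNIV. \<Sum>k\<in>UNIV. \<Sum>i\<in>UNIV. \<Sum>l\<in>UNIV. G x $ j $ k * christoffel G x j i l * X x $ i * Y x $ l * W $ k)"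
    by (simp only: distrib_left distrib_right sum.distrib sum_distrib_left sum_distrib_right mult.assoc) (simp add: mult_ac)
  also have "(\<Sum>j\<in>UNIV. \<Sum>k\<in>UNIV. \<Sum>i\<in>UNIV. X x $ i * G x $ j $ k * pd i (\<lambda>y. Y y $ j) x * W $ k)
     = (\<Sum>i\<in>UNIV. \<Sum>j\<in>UNIV. \<Sum>k\<in>UNIV. X x $ i * G x $ j $ k * pd i (\<lambda>y. Y y $ j) x * W $ k)"
    by (subst swap_in3) (rule sum.swap)
  also have "(\<Sum>j\<in>UNIV. \<Sum>k\<in>UNIV. \<Sum>i\<in>UNIV. \<Sum>l\<in>UNIV. G x $ j $ k * christoffel G x j i l * X x $ i * Y x $ l * W $ k)
     = (\<Sum>i\<in>UNIV. \<Sum>l\<in>UNIV. \<Sum>k\<in>UNIV. \<Sum>j\<in>UNIV. G x $ j $ k * christoffel G x j i l * X x $ i * Y x $ l * W $ k)"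
  proof -
    have "(\<Sum>j\<in>UNIV. \<Sum>k\<in>UNIV. \<Sum>i\<in>UNIV. \<Sum>l\<in>UNIV. G x $ j $ k * christoffel G x j i l * X x $ i * Y x $ l * W $ k)
      = (\<Sum>k\<in>UNIV. \<Sum>j\<in>UNIV. \<Sum>i\<in>UNIV. \<Sum>l\<in>UNIV. G x $ j $ k * christoffel G x j i l * X x $ i * Y x $ l * W $ k)"
      by (rule sum.swap)
    also have "\<dots> = (\<Sum>k\<in>UNIV. \<Sum>i\<in>UNIV. \<Sum>l\<in>UNIV. \<Sum>j\<in>UNIV. G x $ j $ k * christoffel G x j i l * X x $ i * Y x $ l * W $ k)"
    proof (rule sum.cong[OF refl])
      fix k
      show "(\<Sum>j\<in>UNIV. \<Sum>i\<in>UNIV. \<Sum>l\<in>UNIV. G x $ j $ k * christoffel G x j i l * X x $ i * Y x $ l * W $ k)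
        = (\<Sum>i\<in>UNIV. \<Sum>l\<in>UNIV. \<Sum>j\<in>UNIV. G x $ j $ k * christoffel G x j i l * X x $ i * Y x $ l * W $ k)"
        by (subst sum.swap) (rule sum.cong[OF refl], rule sum.swap)
    qed
    also have "\<dots> = (\<Sum>i\<in>UNIV. \<Sum>k\<in>UNIV. \<Sum>l\<in>UNIV. \<Sum>j\<in>UNIV. G x $ j $ k * christoffel G x j i l * X x $ i * Y x $ l * W $ k)"
      by (rule sum.swap)
    also have "\<dots> = (\<Sum>i\<in>UNIV. \<Sum>l\<in>UNIV. \<Sum>k\<in>UNIV. \<Sum>j\<in>UNIV. G x $ j $ k * christoffel G x j i l * X x $ i * Y x $ l * W $ k)"
      by (rule sum.cong[OF refl], rule sum.swap)
    finally show ?thesis .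
  qed
  also have "(\<Sum>i\<in>UNIV. \<Sum>l\<in>UNIV. \<Sum>k\<in>UNIV. \<Sum>j\<in>UNIV. G x $ j $ k * christoffel G x j i l * X x $ i * Y x $ l * W $ k)
     = (\<Sum>i\<in>UNIV. \<Sum>j\<in>UNIV. \<Sum>k\<in>UNIV. X x $ i * Y x $ j * W $ k * GL k i j)"
    unfolding GL_def by (simp add: sum_distrib_left sum_distrib_right mult_ac Gsymx)
  finally show ?thesis .
qed




lemma pd_mult3:
  assumes "a differentiable at x" "b differentiable at x" "c differentiable at x"
  shows "pd i (\<lambda>y. a y * b y * c y) x = pd i a x * b x * c x + a x * pd i b x * c x + a x * b x * pd i c x"
proof -
  have "pd i (\<lambda>y. a y * b y * c y) x = pd i (\<lambda>y. a y * b y) x * c x + a x * b x * pd i c x"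
    using pd_mult[of "\<lambda>y. a y * b y" x c i] assms by simp
  also have "pd i (\<lambda>y. a y * b y) x = pd i a x * b x + a x * pd i b x" using pd_mult assms by blast
  finally show ?thesis by (simp add: algebra_simps)
qed

lemma pd_gm:
  assumes "\<And>j. (\<lambda>y. Y y $ j) differentiable at x" "\<And>j. (\<lambda>y. Z y $ j) differentiable at x"
  shows "pd i (\<lambda>y. gm G y (Y y) (Z y)) x = (\<Sum>j\<in>UNIV. \<Sum>k\<in>UNIV.
     dG i j k * Y x $ j * Z x $ k + G x $ j $ k * pd i (\<lambda>y. Y y $ j) x * Z x $ k
     + G x $ j $ k * Y x $ j * pd i (\<lambda>y. Z y $ k) x)"
proof -
  have d: "\<And>j k. (\<lambda>y. G y $ j $ k * Y y $ j * Z y $ k) differentiable at x"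
    using Gdiff assms by simp
  have d2: "\<And>j. (\<lambda>y. \<Sum>k\<in>UNIV. G y $ j $ k * Y y $ j * Z y $ k) differentiable at x"
    using d by simp
  have "pd i (\<lambda>y. gm G y (Y y) (Z y)) x = (\<Sum>j\<in>UNIV. pd i (\<lambda>y. \<Sum>k\<in>UNIV. G y $ j $ k * Y y $ j * Z y $ k) x)"
    unfolding gm_def using pd_sum[of UNIV "\<lambda>j y. \<Sum>k\<in>UNIV. G y $ j $ k * Y y $ j * Z y $ k" x i] d2 by simp
  also have "\<dots> = (\<Sum>j\<in>UNIV. \<Sum>k\<in>UNIV. pd i (\<lambda>y. G y $ j $ k * Y y $ j * Z y $ k) x)"
    using pd_sum[of UNIV "\<lambda>k y. G y $ _ $ k * Y y $ _ * Z y $ k" x i] d by simp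
  also have "\<dots> = (\<Sum>j\<in>UNIV. \<Sum>k\<in>UNIV.
     dG i j k * Y x $ j * Z x $ k + G x $ j $ k * pd i (\<lambda>y. Y y $ j) x * Z x $ k
     + G x $ j $ k * Y x $ j * pd i (\<lambda>y. Z y $ k) x)"
    unfolding dG_def using pd_mult3[OF Gdiff assms] by simp
  finally show ?thesis .
qed

lemma compat:
  assumes "\<And>j. (\<lambda>y. Y y $ j) differentiable at x" "\<And>j. (\<lambda>y. Z y $ j) differentiable at x"
  shows "(\<Sum>i\<in>UNIV. X x $ i * pd i (\<lambda>y. gm G y (Y y) (Z y)) x)
     = gm G x (cov G X Y x) (Z x) + gm G x (Y x) (cov G X Z x)"
proof -
  define A where "A = (\<Sum>i\<in>UNIV. \<Sum>j\<in>UNIV. \<Sum>k\<in>UNIV. X x $ i * dG i j k * Y x $ j * Z x $ k)"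
  define B where "B = (\<Sum>i\<in>UNIV. \<Sum>j\<in>UNIV. \<Sum>k\<in>UNIV. X x $ i * G x $ j $ k * pd i (\<lambda>y. Y y $ j) x * Z x $ k)"
  define C where "C = (\<Sum>i\<in>UNIV. \<Sum>j\<in>UNIV. \<Sum>k\<in>UNIV. X x $ i * G x $ j $ k * Y x $ j * pd i (\<lambda>y. Z y $ k) x)"
  have L: "(\<Sum>i\<in>UNIV. X x $ i * pd i (\<lambda>y. gm G y (Y y) (Z y)) x) = A + B + C"
    unfolding pd_gm[OF assms] A_def B_def C_def
    by (simp only: sum.distrib sum_distrib_left distrib_left) (simp add: mult_ac)
  have R1: "gm G x (cov G X Y x) (Z x) = B
     + (\<Sum>i\<in>UNIV. \<Sum>j\<in>UNIV. \<Sum>k\<in>UNIV. X x $ i * Y x $ j * Z x $ k * GL k i j)"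
    unfolding cov_gm B_def ..
  have R2: "gm G x (Y x) (cov G X Z x) = C
     + (\<Sum>i\<in>UNIV. \<Sum>j\<in>UNIV. \<Sum>k\<in>UNIV. X x $ i * Y x $ j * Z x $ k * GL j i k)"
  proof -
    have "gm G x (Y x) (cov G X Z x) = gm G x (cov G X Z x) (Y x)" by (rule gm_sym)
    also have "\<dots> = (\<Sum>i\<in>UNIV. \<Sum>k\<in>UNIV. \<Sum>j\<in>UNIV. X x $ i * G x $ k $ j * pd i (\<lambda>y. Z y $ k) x * Y x $ j)
       + (\<Sum>i\<in>UNIV. \<Sum>k\<in>UNIV. \<Sum>j\<in>UNIV. X x $ i * Z x $ k * Y x $ j * GL j i k)"
      unfolding cov_gm ..
    also have "(\<Sum>i\<in>UNIV. \<Sum>k\<in>UNIV. \<Sum>j\<in>UNIV. X x $ i * G x $ k $ j * pd i (\<lambda>y. Z y $ k) x * Y x $ j) = C"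
      unfolding C_def by (subst swap_in3) (simp add: mult_ac Gsymx)
    also have "(\<Sum>i\<in>UNIV. \<Sum>k\<in>UNIV. \<Sum>j\<in>UNIV. X x $ i * Z x $ k * Y x $ j * GL j i k)
       = (\<Sum>i\<in>UNIV. \<Sum>j\<in>UNIV. \<Sum>k\<in>UNIV. X x $ i * Y x $ j * Z x $ k * GL j i k)"
      by (subst swap_in3) (simp add: mult_ac)
    finally show ?thesis .
  qed
  have "A = (\<Sum>i\<in>UNIV. \<Sum>j\<in>UNIV. \<Sum>k\<in>UNIV. X x $ i * Y x $ j * Z x $ k * GL k i j)
     + (\<Sum>i\<in>UNIV. \<Sum>j\<in>UNIV. \<Sum>k\<in>UNIV. X x $ i * Y x $ j * Z x $ k * GL j i k)"
  proof -
    have "\<And>i j k. dG i j k = GL k i j + GL j i k"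
      unfolding GL_eq using dG_sym by (simp add: field_simps)
    then show ?thesis unfolding A_def
      by (simp only: sum.distrib[symmetric] distrib_left[symmetric]) (simp add: mult_ac)
  qed
  then show ?thesis using L R1 R2 by simp
qed

lemma torsion:
  shows "lie X Y x = cov G X Y x - cov G Y X x"
proof -
  have "\<And>k. (\<Sum>i\<in>UNIV. \<Sum>j\<in>UNIV. christoffel G x k i j * X x $ i * Y x $ j)
     = (\<Sum>i\<in>UNIV. \<Sum>j\<in>UNIV. christoffel G x k i j * Y x $ i * X x $ j)"
    by (subst sum.swap) (simp add: chr_sym[of _ _ _] mult_ac)
  then show ?thesis unfolding lie_def vec_eq_iff
    by (simp add: sum_subtractf cov_comp)
qed

definition cc :: "nat \<Rightarrow> nat \<Rightarrow> nat \<Rightarrow> real" where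
  "cc a b d = gm G x (cov G (e a) (e b) x) (e d x)"

lemma gm_diff_left: "gm G x (v - v') w = gm G x v w - gm G x v' w"
  by (simp add: gm_inner inner_diff_left)

lemma orth_const_pd: "a < 4 \<Longrightarrow> b < 4 \<Longrightarrow> pd i (\<lambda>y. gm G y (e a y) (e b y)) x = 0"
proof -
  assume a: "a < 4" "b < 4"
  have "pd i (\<lambda>y. gm G y (e a y) (e b y)) x = pd i (\<lambda>y. (if a = b then (if a = 0 then -1 else 1) else 0)) x"
    by (rule pd_cong[OF op xU]) (use orth_y a in blast)
  then show ?thesis by simp
qed

lemma cc_anti: "b < 4 \<Longrightarrow> d < 4 \<Longrightarrow> cc a b d = - cc a d b"
proof -
  assume bd: "b < 4" "d < 4"
  have "(\<Sum>i\<in>UNIV. e a x $ i * pd i (\<lambda>y. gm G y (e b y) (e d y)) x)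
     = gm G x (cov G (e a) (e b) x) (e d x) + gm G x (e b x) (cov G (e a) (e d) x)"
    by (rule compat[OF ediff[OF bd(1)] ediff[OF bd(2)]])
  moreover have "(\<Sum>i\<in>UNIV. e a x $ i * pd i (\<lambda>y. gm G y (e b y) (e d y)) x) = 0"
    using orth_const_pd[OF bd] by simp
  moreover have "gm G x (e b x) (cov G (e a) (e d) x) = cc a d b"
    unfolding cc_def by (rule gm_sym)
  ultimately show ?thesis unfolding cc_def by linarith
qed

lemma cc_self: "b < 4 \<Longrightarrow> cc a b b = 0"
  using cc_anti[of b b a] by simp

lemma lie_cc: "gm G x (lie (e a) (e b) x) (e d x) = cc a b d - cc b a d"
  unfolding torsion cc_def by (rule gm_diff_left)

definition divg :: "vfield \<Rightarrow> real" where
  "divg A = (\<Sum>m\<in>UNIV. pd m (\<lambda>y. A y $ m) x) + (\<Sum>m\<in>UNIV. \<Sum>l\<in>UNIV. christoffel G x m m l * A x $ l)"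

lemma complete_comp: "(\<Sum>a<4. eps a * e a x $ i * (\<Sum>l\<in>UNIV. G x $ k $ l * e a x $ l)) = (if i = k then 1 else 0)"
proof -
  have gax: "\<And>w. gm G x (axis k 1) w = (\<Sum>l\<in>UNIV. G x $ k $ l * w $ l)"
    unfolding gm_inner by (simp add: inner_axis' matrix_vector_mult_def)
  have "axis k (1::real) $ i = (\<Sum>a<4. (eps a * gm G x (axis k 1) (e a x)) *\<^sub>R e a x) $ i"
    using complete[of "axis k 1"] by simp
  then show ?thesis unfolding gax by (simp add: axis_def mult_ac)
qed

lemma div_frame: "divg A = (\<Sum>a<4. eps a * gm G x (cov G (e a) A x) (e a x))"
proof -
  define T where "T k i = pd i (\<lambda>y. A y $ k) x + (\<Sum>j\<in>UNIV. christoffel G x k i j * A x $ j)" for k i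
  have cv: "\<And>X k. cov G X A x $ k = (\<Sum>i\<in>UNIV. X x $ i * T k i)"
    unfolding cov_comp T_def by (simp add: distrib_left sum.distrib sum_distrib_left mult_ac)
  have g: "\<And>a. gm G x (cov G (e a) A x) (e a x) = (\<Sum>k\<in>UNIV. \<Sum>i\<in>UNIV. T k i * (e a x $ i * (\<Sum>l\<in>UNIV. G x $ k $ l * e a x $ l)))"
    unfolding gm_def cv apply (simp add: sum_distrib_left sum_distrib_right mult_ac)
    apply (subst swap_in3) apply (simp add: mult_ac) done
  have "(\<Sum>a<4. eps a * gm G x (cov G (e a) A x) (e a x))
      = (\<Sum>a<4. \<Sum>k\<in>UNIV. \<Sum>i\<in>UNIV. T k i * (eps a * e a x $ i * (\<Sum>l\<in>UNIV. G x $ k $ l * e a x $ l)))"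
    unfolding g by (simp add: sum_distrib_left mult_ac)
  also have "\<dots> = (\<Sum>k\<in>UNIV. \<Sum>i\<in>UNIV. \<Sum>a<4. T k i * (eps a * e a x $ i * (\<Sum>l\<in>UNIV. G x $ k $ l * e a x $ l)))"
    by (subst sum.swap) (rule sum.cong[OF refl], rule sum.swap)
  also have "\<dots> = (\<Sum>k\<in>UNIV. \<Sum>i\<in>UNIV. T k i * (if i = k then 1 else 0))"
    by (simp only: sum_distrib_left[symmetric] complete_comp)
  also have "\<dots> = (\<Sum>k\<in>UNIV. T k k)"
    by (simp add: if_distrib[of "\<lambda>t. _ * t"] cong: if_cong)
  also have "\<dots> = divg A" unfolding T_def divg_def by (simp add: sum.distrib)
  finally show ?thesis by simp
qed

lemma raise_vec: "y \<in> U \<Longrightarrow> (\<Sum>a\<in>UNIV. ginv G y $ m $ a * flat G A y $ a) = A y $ m"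
proof -
  assume y: "y \<in> U"
  have "(\<Sum>a\<in>UNIV. ginv G y $ m $ a * flat G A y $ a) = (\<Sum>a\<in>UNIV. \<Sum>j\<in>UNIV. ginv G y $ m $ a * G y $ a $ j * A y $ j)"
    unfolding flat_def by (simp add: sum_distrib_left mult.assoc)
  also have "\<dots> = (\<Sum>j\<in>UNIV. \<Sum>a\<in>UNIV. ginv G y $ m $ a * G y $ a $ j * A y $ j)" by (rule sum.swap)
  also have "\<dots> = (\<Sum>j\<in>UNIV. (\<Sum>a\<in>UNIV. ginv G y $ m $ a * G y $ a $ j) * A y $ j)" by (simp add: sum_distrib_right)
  also have "\<dots> = A y $ m" using inv2[OF y] by (simp add: sum_delta_mult)
  finally show ?thesis .
qed

lemma raise_F: "y \<in> U \<Longrightarrow> raise2 G (\<lambda>x. u x *\<^sub>R wedge (flat G A) (flat G B) x) y $ m $ n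
   = u y * (A y $ m * B y $ n - B y $ m * A y $ n)"
proof -
  assume y: "y \<in> U"
  let ?a = "flat G A y" and ?b = "flat G B y" and ?Gi = "ginv G y"
  have "raise2 G (\<lambda>x. u x *\<^sub>R wedge (flat G A) (flat G B) x) y $ m $ n
     = (\<Sum>a\<in>UNIV. \<Sum>b\<in>UNIV. ?Gi $ m $ a * ?Gi $ n $ b * (u y * (?a $ a * ?b $ b - ?a $ b * ?b $ a)))"
    unfolding raise2_def wedge_def by simp
  also have "\<dots> = u y * ((\<Sum>a\<in>UNIV. \<Sum>b\<in>UNIV. (?Gi $ m $ a * ?a $ a) * (?Gi $ n $ b * ?b $ b))
      - (\<Sum>a\<in>UNIV. \<Sum>b\<in>UNIV. (?Gi $ m $ a * ?b $ a) * (?Gi $ n $ b * ?a $ b)))"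
    by (simp add: sum_distrib_left sum_subtractf[symmetric] algebra_simps)
  also have "\<dots> = u y * ((\<Sum>a\<in>UNIV. ?Gi $ m $ a * ?a $ a) * (\<Sum>b\<in>UNIV. ?Gi $ n $ b * ?b $ b)
      - (\<Sum>a\<in>UNIV. ?Gi $ m $ a * ?b $ a) * (\<Sum>b\<in>UNIV. ?Gi $ n $ b * ?a $ b))"
    by (simp add: sum_product)
  also have "\<dots> = u y * (A y $ m * B y $ n - B y $ m * A y $ n)"
    using raise_vec[OF y] by simp
  finally show ?thesis .
qed

definition dirx :: "vfield \<Rightarrow> (real^4 \<Rightarrow> real) \<Rightarrow> real" where
  "dirx A f = (\<Sum>i\<in>UNIV. A x $ i * pd i f x)"

lemma chr_contract_sym: "(\<Sum>m\<in>UNIV. \<Sum>l\<in>UNIV. christoffel G x n m l * (P $ m * Q $ l))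
   = (\<Sum>m\<in>UNIV. \<Sum>l\<in>UNIV. christoffel G x n m l * (Q $ m * P $ l))"
  by (subst sum.swap) (simp add: chr_sym[of n] mult_ac)

lemma current_formula:
  assumes du: "u differentiable at x" and dA: "\<And>j. (\<lambda>y. A y $ j) differentiable at x"
    and dB: "\<And>j. (\<lambda>y. B y $ j) differentiable at x"
    and R: "\<And>y m n. y \<in> U \<Longrightarrow> raise2 G F y $ m $ n = u y * (A y $ m * B y $ n - B y $ m * A y $ n)"
  shows "current G F x = - ((dirx A u + u x * divg A) *\<^sub>R B x - (dirx B u + u x * divg B) *\<^sub>R A x
     + u x *\<^sub>R lie A B x)"
proof -
  have comp: "current G F x $ n = - ((dirx A u + u x * divg A) * B x $ n - (dirx B u + u x * divg B) * A x $ n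
     + u x * lie A B x $ n)" for n
  proof -
    have pdm: "pd m (\<lambda>y. raise2 G F y $ m $ n) x = pd m u x * (A x $ m * B x $ n - B x $ m * A x $ n)
       + u x * (pd m (\<lambda>y. A y $ m) x * B x $ n + A x $ m * pd m (\<lambda>y. B y $ n) x
         - (pd m (\<lambda>y. B y $ m) x * A x $ n + B x $ m * pd m (\<lambda>y. A y $ n) x))" for m
    proof -
      have "pd m (\<lambda>y. raise2 G F y $ m $ n) x = pd m (\<lambda>y. u y * (A y $ m * B y $ n - B y $ m * A y $ n)) x"
        by (rule pd_cong[OF op xU]) (rule R)
      also have "\<dots> = pd m u x * (A x $ m * B x $ n - B x $ m * A x $ n)
         + u x * pd m (\<lambda>y. A y $ m * B y $ n - B y $ m * A y $ n) x"
        by (rule pd_mult) (use du dA dB in auto)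
      also have "pd m (\<lambda>y. A y $ m * B y $ n - B y $ m * A y $ n) x
         = pd m (\<lambda>y. A y $ m * B y $ n) x - pd m (\<lambda>y. B y $ m * A y $ n) x"
        by (rule pd_diff) (use dA dB in auto)
      also have "pd m (\<lambda>y. A y $ m * B y $ n) x = pd m (\<lambda>y. A y $ m) x * B x $ n + A x $ m * pd m (\<lambda>y. B y $ n) x"
        by (rule pd_mult[OF dA dB])
      also have "pd m (\<lambda>y. B y $ m * A y $ n) x = pd m (\<lambda>y. B y $ m) x * A x $ n + B x $ m * pd m (\<lambda>y. A y $ n) x"
        by (rule pd_mult[OF dB dA])
      finally show ?thesis .
    qed
    have S1: "(\<Sum>m\<in>UNIV. pd m (\<lambda>y. raise2 G F y $ m $ n) x)
       = dirx A u * B x $ n - dirx B u * A x $ n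
         + u x * (\<Sum>m\<in>UNIV. pd m (\<lambda>y. A y $ m) x) * B x $ n - u x * (\<Sum>m\<in>UNIV. pd m (\<lambda>y. B y $ m) x) * A x $ n
         + u x * lie A B x $ n"
      unfolding pdm dirx_def lie_def
      by (simp add: sum.distrib sum_subtractf sum_distrib_left sum_distrib_right algebra_simps)
    have S2: "(\<Sum>m\<in>UNIV. \<Sum>l\<in>UNIV. christoffel G x m m l * raise2 G F x $ l $ n)
       = u x * (\<Sum>m\<in>UNIV. \<Sum>l\<in>UNIV. christoffel G x m m l * A x $ l) * B x $ n
       - u x * (\<Sum>m\<in>UNIV. \<Sum>l\<in>UNIV. christoffel G x m m l * B x $ l) * A x $ n"
      by (simp only: R[OF xU]) (simp add: sum_subtractf sum_distrib_left sum_distrib_right algebra_simps)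
    have S3: "(\<Sum>m\<in>UNIV. \<Sum>l\<in>UNIV. christoffel G x n m l * raise2 G F x $ m $ l) = 0"
    proof -
      have "(\<Sum>m\<in>UNIV. \<Sum>l\<in>UNIV. christoffel G x n m l * raise2 G F x $ m $ l)
        = u x * ((\<Sum>m\<in>UNIV. \<Sum>l\<in>UNIV. christoffel G x n m l * (A x $ m * B x $ l))
           - (\<Sum>m\<in>UNIV. \<Sum>l\<in>UNIV. christoffel G x n m l * (B x $ m * A x $ l)))"
        by (simp only: R[OF xU]) (simp add: sum_subtractf sum_distrib_left algebra_simps)
      then show ?thesis using chr_contract_sym[of n "A x" "B x"] by simp
    qed
    show ?thesis unfolding current_def vec_lambda_beta S1 S2 S3 divg_def
      by (simp add: algebra_simps)
  qed
  then show ?thesis by (simp add: vec_eq_iff)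
qed




definition dv :: "real^4 \<Rightarrow> (real^4 \<Rightarrow> real) \<Rightarrow> real" where
  "dv X f = (\<Sum>i\<in>UNIV. X $ i * pd i f x)"
definition al :: "vfield \<Rightarrow> real^4 \<Rightarrow> real" where
  "al a Y = (\<Sum>j\<in>UNIV. a x $ j * Y $ j)"
definition Dd :: "vfield \<Rightarrow> real^4 \<Rightarrow> real^4 \<Rightarrow> real" where
  "Dd a X Y = (\<Sum>i\<in>UNIV. \<Sum>j\<in>UNIV. X $ i * pd i (\<lambda>y. a y $ j) x * Y $ j)"

lemma sum_rot: "(\<Sum>i\<in>A. \<Sum>j\<in>B. \<Sum>k\<in>C. f i j k) = (\<Sum>j\<in>B. \<Sum>k\<in>C. \<Sum>i\<in>A. f i j k)"
  by (subst sum.swap) (rule sum.cong[OF refl], rule sum.swap)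

lemma prod3: "(\<Sum>i\<in>A. f i) * (\<Sum>j\<in>B. g j) * (\<Sum>k\<in>C. h k) = (\<Sum>k\<in>C. \<Sum>j\<in>B. \<Sum>i\<in>A. f i * g j * (h k::real))"
  by (simp add: sum_distrib_left sum_distrib_right)
lemma prod21: "(\<Sum>i\<in>A. \<Sum>j\<in>B. f i j) * (\<Sum>k\<in>C. h k) = (\<Sum>k\<in>C. \<Sum>i\<in>A. \<Sum>j\<in>B. f i j * (h k::real))"
  by (simp add: sum_distrib_left sum_distrib_right)
lemma prod12: "(\<Sum>k\<in>C. h k) * (\<Sum>i\<in>A. \<Sum>j\<in>B. f i j) = (\<Sum>i\<in>A. \<Sum>j\<in>B. \<Sum>k\<in>C. h k * (f i j::real))"
  by (simp add: sum_distrib_left sum_distrib_right)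

lemma Pf_formula:
  assumes du: "u differentiable at x" and da: "\<And>j. (\<lambda>y. a y $ j) differentiable at x"
    and db: "\<And>j. (\<lambda>y. b y $ j) differentiable at x"
  shows "(\<Sum>i\<in>UNIV. \<Sum>j\<in>UNIV. \<Sum>k\<in>UNIV. pd i (\<lambda>y. u y * (a y $ j * b y $ k - a y $ k * b y $ j)) x * X $ i * Y $ j * Z $ k)
    = dv X u * (al a Y * al b Z - al a Z * al b Y)
      + u x * (Dd a X Y * al b Z + al a Y * Dd b X Z - Dd a X Z * al b Y - al a Z * Dd b X Y)"
proof -
  have pdm: "pd i (\<lambda>y. u y * (a y $ j * b y $ k - a y $ k * b y $ j)) x
     = pd i u x * a x $ j * b x $ k - pd i u x * a x $ k * b x $ j
       + u x * (pd i (\<lambda>y. a y $ j) x * b x $ k) + u x * (a x $ j * pd i (\<lambda>y. b y $ k) x)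
       - u x * (pd i (\<lambda>y. a y $ k) x * b x $ j) - u x * (a x $ k * pd i (\<lambda>y. b y $ j) x)" for i j k
  proof -
    have "pd i (\<lambda>y. u y * (a y $ j * b y $ k - a y $ k * b y $ j)) x
       = pd i u x * (a x $ j * b x $ k - a x $ k * b x $ j) + u x * pd i (\<lambda>y. a y $ j * b y $ k - a y $ k * b y $ j) x"
      by (rule pd_mult) (use du da db in auto)
    also have "pd i (\<lambda>y. a y $ j * b y $ k - a y $ k * b y $ j) x
       = pd i (\<lambda>y. a y $ j * b y $ k) x - pd i (\<lambda>y. a y $ k * b y $ j) x"
      by (rule pd_diff) (use da db in auto)
    also have "pd i (\<lambda>y. a y $ j * b y $ k) x = pd i (\<lambda>y. a y $ j) x * b x $ k + a x $ j * pd i (\<lambda>y. b y $ k) x"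
      by (rule pd_mult[OF da db])
    also have "pd i (\<lambda>y. a y $ k * b y $ j) x = pd i (\<lambda>y. a y $ k) x * b x $ j + a x $ k * pd i (\<lambda>y. b y $ j) x"
      by (rule pd_mult[OF da db])
    finally show ?thesis by (simp add: algebra_simps)
  qed
  have t1: "(\<Sum>i\<in>UNIV. \<Sum>j\<in>UNIV. \<Sum>k\<in>UNIV. pd i u x * a x $ j * b x $ k * X $ i * Y $ j * Z $ k)
     = dv X u * al a Y * al b Z"
    unfolding dv_def al_def prod3 by (rule trans[OF sum_rot], rule trans[OF sum.swap]) (simp add: mult_ac)
  have t2: "(\<Sum>i\<in>UNIV. \<Sum>j\<in>UNIV. \<Sum>k\<in>UNIV. pd i u x * a x $ k * b x $ j * X $ i * Y $ j * Z $ k)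
     = dv X u * al a Z * al b Y"
    unfolding dv_def al_def prod3 by (rule trans[OF sum_rot]) (simp add: mult_ac)
  have t3: "(\<Sum>i\<in>UNIV. \<Sum>j\<in>UNIV. \<Sum>k\<in>UNIV. u x * (pd i (\<lambda>y. a y $ j) x * b x $ k) * X $ i * Y $ j * Z $ k)
     = u x * (Dd a X Y * al b Z)"
    unfolding Dd_def al_def prod21 by (rule trans[OF sum_rot], rule trans[OF sum_rot]) (simp add: sum_distrib_left mult_ac)
  have t4: "(\<Sum>i\<in>UNIV. \<Sum>j\<in>UNIV. \<Sum>k\<in>UNIV. u x * (a x $ j * pd i (\<lambda>y. b y $ k) x) * X $ i * Y $ j * Z $ k)
     = u x * (al a Y * Dd b X Z)"
    unfolding Dd_def al_def prod12 by (rule trans[OF swap_in3]) (simp add: sum_distrib_left mult_ac)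
  have t5: "(\<Sum>i\<in>UNIV. \<Sum>j\<in>UNIV. \<Sum>k\<in>UNIV. u x * (pd i (\<lambda>y. a y $ k) x * b x $ j) * X $ i * Y $ j * Z $ k)
     = u x * (Dd a X Z * al b Y)"
    unfolding Dd_def al_def prod21 by (rule trans[OF sum.swap]) (simp add: sum_distrib_left mult_ac)
  have t6: "(\<Sum>i\<in>UNIV. \<Sum>j\<in>UNIV. \<Sum>k\<in>UNIV. u x * (a x $ k * pd i (\<lambda>y. b y $ j) x) * X $ i * Y $ j * Z $ k)
     = u x * (al a Z * Dd b X Y)"
    unfolding Dd_def al_def prod12 by (simp add: sum_distrib_left mult_ac)
  have "(\<Sum>i\<in>UNIV. \<Sum>j\<in>UNIV. \<Sum>k\<in>UNIV. pd i (\<lambda>y. u y * (a y $ j * b y $ k - a y $ k * b y $ j)) x * X $ i * Y $ j * Z $ k)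
    = (\<Sum>i\<in>UNIV. \<Sum>j\<in>UNIV. \<Sum>k\<in>UNIV. pd i u x * a x $ j * b x $ k * X $ i * Y $ j * Z $ k)
    - (\<Sum>i\<in>UNIV. \<Sum>j\<in>UNIV. \<Sum>k\<in>UNIV. pd i u x * a x $ k * b x $ j * X $ i * Y $ j * Z $ k)
    + (\<Sum>i\<in>UNIV. \<Sum>j\<in>UNIV. \<Sum>k\<in>UNIV. u x * (pd i (\<lambda>y. a y $ j) x * b x $ k) * X $ i * Y $ j * Z $ k)
    + (\<Sum>i\<in>UNIV. \<Sum>j\<in>UNIV. \<Sum>k\<in>UNIV. u x * (a x $ j * pd i (\<lambda>y. b y $ k) x) * X $ i * Y $ j * Z $ k)
    - (\<Sum>i\<in>UNIV. \<Sum>j\<in>UNIV. \<Sum>k\<in>UNIV. u x * (pd i (\<lambda>y. a y $ k) x * b x $ j) * X $ i * Y $ j * Z $ k)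
    - (\<Sum>i\<in>UNIV. \<Sum>j\<in>UNIV. \<Sum>k\<in>UNIV. u x * (a x $ k * pd i (\<lambda>y. b y $ j) x) * X $ i * Y $ j * Z $ k)"
    unfolding pdm by (simp only: sum.distrib sum_subtractf distrib_right left_diff_distrib)
  also have "\<dots> = dv X u * (al a Y * al b Z - al a Z * al b Y)
      + u x * (Dd a X Y * al b Z + al a Y * Dd b X Z - Dd a X Z * al b Y - al a Z * Dd b X Y)"
    unfolding t1 t2 t3 t4 t5 t6 by (simp add: algebra_simps)
  finally show ?thesis .
qed

lemma tri_zero:
  assumes H: "\<And>p q r. p < 4 \<Longrightarrow> q < 4 \<Longrightarrow> r < 4 \<Longrightarrow>
     (\<Sum>i\<in>UNIV. \<Sum>j\<in>UNIV. \<Sum>k\<in>UNIV. T i j k * e p x $ i * e q x $ j * e r x $ k) = 0"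
  shows "T i j k = 0"
proof -
  have s1: "(\<Sum>i\<in>UNIV. \<Sum>j\<in>UNIV. T i j k * e p x $ i * e q x $ j) = 0" if pq: "p < 4" "q < 4" for p q k
  proof (rule basis_zero[where s="\<lambda>k. \<Sum>i\<in>UNIV. \<Sum>j\<in>UNIV. T i j k * e p x $ i * e q x $ j"], intro allI impI)
    fix r :: nat assume r: "r < 4"
    have "(\<Sum>k\<in>UNIV. (\<Sum>i\<in>UNIV. \<Sum>j\<in>UNIV. T i j k * e p x $ i * e q x $ j) * e r x $ k)
       = (\<Sum>k\<in>UNIV. \<Sum>i\<in>UNIV. \<Sum>j\<in>UNIV. T i j k * e p x $ i * e q x $ j * e r x $ k)"
      by (simp add: sum_distrib_right)
    also have "\<dots> = (\<Sum>i\<in>UNIV. \<Sum>j\<in>UNIV. \<Sum>k\<in>UNIV. T i j k * e p x $ i * e q x $ j * e r x $ k)"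
      by (rule sum_rot)
    also have "\<dots> = 0" using H pq r by blast
    finally show "(\<Sum>k\<in>UNIV. (\<Sum>i\<in>UNIV. \<Sum>j\<in>UNIV. T i j k * e p x $ i * e q x $ j) * e r x $ k) = 0" .
  qed
  have s2: "(\<Sum>i\<in>UNIV. T i j k * e p x $ i) = 0" if p: "p < 4" for p j k
  proof (rule basis_zero[where s="\<lambda>j. \<Sum>i\<in>UNIV. T i j k * e p x $ i"], intro allI impI)
    fix q :: nat assume q: "q < 4"
    have "(\<Sum>j\<in>UNIV. (\<Sum>i\<in>UNIV. T i j k * e p x $ i) * e q x $ j)
       = (\<Sum>j\<in>UNIV. \<Sum>i\<in>UNIV. T i j k * e p x $ i * e q x $ j)"
      by (simp add: sum_distrib_right)
    also have "\<dots> = (\<Sum>i\<in>UNIV. \<Sum>j\<in>UNIV. T i j k * e p x $ i * e q x $ j)"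
      by (rule sum.swap)
    also have "\<dots> = 0" using s1 p q by blast
    finally show "(\<Sum>j\<in>UNIV. (\<Sum>i\<in>UNIV. T i j k * e p x $ i) * e q x $ j) = 0" .
  qed
  show ?thesis
    by (rule basis_zero[where s="\<lambda>i. T i j k"]) (use s2 in auto)
qed

lemma cyc_sum:
  fixes P :: "4 \<Rightarrow> 4 \<Rightarrow> 4 \<Rightarrow> real" and X Y Z :: "real^4"
  shows "(\<Sum>i\<in>UNIV. \<Sum>j\<in>UNIV. \<Sum>k\<in>UNIV. (P i j k + P j k i + P k i j) * X $ i * Y $ j * Z $ k)
   = (\<Sum>i\<in>UNIV. \<Sum>j\<in>UNIV. \<Sum>k\<in>UNIV. P i j k * X $ i * Y $ j * Z $ k)
   + (\<Sum>i\<in>UNIV. \<Sum>j\<in>UNIV. \<Sum>k\<in>UNIV. P i j k * Y $ i * Z $ j * X $ k)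
   + (\<Sum>i\<in>UNIV. \<Sum>j\<in>UNIV. \<Sum>k\<in>UNIV. P i j k * Z $ i * X $ j * Y $ k)"
proof -
  have a: "(\<Sum>i\<in>UNIV. \<Sum>j\<in>UNIV. \<Sum>k\<in>UNIV. P j k i * X $ i * Y $ j * Z $ k)
     = (\<Sum>i\<in>UNIV. \<Sum>j\<in>UNIV. \<Sum>k\<in>UNIV. P i j k * Y $ i * Z $ j * X $ k)"
    by (rule trans[OF sum_rot]) (intro sum.cong refl; simp add: ac_simps)
  have b: "(\<Sum>i\<in>UNIV. \<Sum>j\<in>UNIV. \<Sum>k\<in>UNIV. P k i j * X $ i * Y $ j * Z $ k)
     = (\<Sum>i\<in>UNIV. \<Sum>j\<in>UNIV. \<Sum>k\<in>UNIV. P i j k * Z $ i * X $ j * Y $ k)"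
    by (rule trans[OF sum_rot], rule trans[OF sum_rot]) (intro sum.cong refl; simp add: ac_simps)
  show ?thesis unfolding a[symmetric] b[symmetric]
    by (simp only: sum.distrib distrib_right)
qed

definition vd :: "nat \<Rightarrow> nat \<Rightarrow> real^4" where
  "vd p q = (\<chi> j. \<Sum>i\<in>UNIV. e p x $ i * pd i (\<lambda>y. e q y $ j) x)"

lemma lie_vd: "lie (e p) (e q) x = vd p q - vd q p"
  unfolding lie_def vd_def by (simp add: vec_eq_iff sum_subtractf)

lemma flat_diff: "s < 4 \<Longrightarrow> (\<lambda>y. flat G (e s) y $ j) differentiable at x"
  unfolding flat_def using Gdiff ediff by simp

lemma al_flat: "al (flat G (e s)) w = gm G x w (e s x)"
  unfolding al_def flat_def gm_def by (simp add: sum_distrib_left mult_ac)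

lemma Dd_frame:
  assumes "s < 4" "p < 4" "q < 4"
  shows "Dd (flat G (e s)) (e p x) (e q x) = - gm G x (vd p q) (e s x)"
proof -
  have h: "pd i (\<lambda>y. \<Sum>j\<in>UNIV. flat G (e s) y $ j * e q y $ j) x = 0" for i
  proof -
    have "pd i (\<lambda>y. \<Sum>j\<in>UNIV. flat G (e s) y $ j * e q y $ j) x = pd i (\<lambda>y. gm G y (e q y) (e s y)) x"
      by (rule pd_cong[OF op xU]) (simp add: flat_def gm_def sum_distrib_left mult_ac)
    then show ?thesis using orth_const_pd assms by simp
  qed
  have h2: "pd i (\<lambda>y. \<Sum>j\<in>UNIV. flat G (e s) y $ j * e q y $ j) x
     = (\<Sum>j\<in>UNIV. pd i (\<lambda>y. flat G (e s) y $ j) x * e q x $ j + flat G (e s) x $ j * pd i (\<lambda>y. e q y $ j) x)" for i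
  proof -
    have "pd i (\<lambda>y. \<Sum>j\<in>UNIV. flat G (e s) y $ j * e q y $ j) x = (\<Sum>j\<in>UNIV. pd i (\<lambda>y. flat G (e s) y $ j * e q y $ j) x)"
      by (rule pd_sum) (use flat_diff ediff assms in auto)
    also have "\<dots> = (\<Sum>j\<in>UNIV. pd i (\<lambda>y. flat G (e s) y $ j) x * e q x $ j + flat G (e s) x $ j * pd i (\<lambda>y. e q y $ j) x)"
      by (rule sum.cong[OF refl], rule pd_mult) (use flat_diff ediff assms in auto)
    finally show ?thesis .
  qed
  have "0 = (\<Sum>i\<in>UNIV. e p x $ i * pd i (\<lambda>y. \<Sum>j\<in>UNIV. flat G (e s) y $ j * e q y $ j) x)"
    using h by simp
  also have "\<dots> = Dd (flat G (e s)) (e p x) (e q x) + al (flat G (e s)) (vd p q)"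
  proof -
    have "(\<Sum>i\<in>UNIV. e p x $ i * pd i (\<lambda>y. \<Sum>j\<in>UNIV. flat G (e s) y $ j * e q y $ j) x)
      = (\<Sum>i\<in>UNIV. \<Sum>j\<in>UNIV. e p x $ i * pd i (\<lambda>y. flat G (e s) y $ j) x * e q x $ j)
      + (\<Sum>i\<in>UNIV. \<Sum>j\<in>UNIV. flat G (e s) x $ j * (e p x $ i * pd i (\<lambda>y. e q y $ j) x))"
      unfolding h2 by (simp only: sum_distrib_left sum.distrib distrib_left) (simp add: mult_ac)
    also have "(\<Sum>i\<in>UNIV. \<Sum>j\<in>UNIV. flat G (e s) x $ j * (e p x $ i * pd i (\<lambda>y. e q y $ j) x))
      = al (flat G (e s)) (vd p q)"
      unfolding al_def vd_def by (subst sum.swap) (simp add: sum_distrib_left)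
    finally show ?thesis unfolding Dd_def .
  qed
  finally show ?thesis unfolding al_flat by simp
qed


end



context pt begin

lemma cc_ord: "b < 4 \<Longrightarrow> d < b \<Longrightarrow> cc a b d = - cc a d b"
  by (rule cc_anti) simp_all

lemma span_orth:
  assumes "v \<in> span {e p x, e q x}" "d < 4" "p < 4" "q < 4" "d \<noteq> p" "d \<noteq> q"
  shows "gm G x v (e d x) = 0"
proof -
  have "orthogonal (G x *v e d x) v"
  proof (rule orthogonal_to_span[OF assms(1)])
    fix y assume "y \<in> {e p x, e q x}"
    then have "gm G x y (e d x) = 0" using orth assms by auto
    then show "orthogonal (G x *v e d x) y" unfolding orthogonal_def gm_inner by (simp add: inner_commute)
  qed
  then show ?thesis unfolding orthogonal_def gm_inner by (simp add: inner_commute)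
qed

lemma lie01_exp: "lie (e 0) (e 1) x \<in> span {e 0 x, e 1 x} \<Longrightarrow>
  lie (e 0) (e 1) x = (- gm G x (lie (e 0) (e 1) x) (e 0 x)) *\<^sub>R e 0 x + gm G x (lie (e 0) (e 1) x) (e 1 x) *\<^sub>R e 1 x"
proof -
  assume sp: "lie (e 0) (e 1) x \<in> span {e 0 x, e 1 x}"
  have z: "gm G x (lie (e 0) (e 1) x) (e 2 x) = 0" "gm G x (lie (e 0) (e 1) x) (e 3 x) = 0"
    using span_orth[OF sp] by auto
  have "lie (e 0) (e 1) x = (\<Sum>a<4. (eps a * gm G x (lie (e 0) (e 1) x) (e a x)) *\<^sub>R e a x)"
    by (rule complete)
  also have "\<dots> = (- gm G x (lie (e 0) (e 1) x) (e 0 x)) *\<^sub>R e 0 x + gm G x (lie (e 0) (e 1) x) (e 1 x) *\<^sub>R e 1 x"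
    unfolding sum_lt4 using z by (simp add: eps_def One_nat_def)
  finally show ?thesis .
qed

lemma lie23_exp: "lie (e 2) (e 3) x \<in> span {e 2 x, e 3 x} \<Longrightarrow>
  lie (e 2) (e 3) x = gm G x (lie (e 2) (e 3) x) (e 2 x) *\<^sub>R e 2 x + gm G x (lie (e 2) (e 3) x) (e 3 x) *\<^sub>R e 3 x"
proof -
  assume sp: "lie (e 2) (e 3) x \<in> span {e 2 x, e 3 x}"
  have z: "gm G x (lie (e 2) (e 3) x) (e 0 x) = 0" "gm G x (lie (e 2) (e 3) x) (e 1 x) = 0"
    using span_orth[OF sp] by auto
  have "lie (e 2) (e 3) x = (\<Sum>a<4. (eps a * gm G x (lie (e 2) (e 3) x) (e a x)) *\<^sub>R e a x)"
    by (rule complete)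
  also have "\<dots> = gm G x (lie (e 2) (e 3) x) (e 2 x) *\<^sub>R e 2 x + gm G x (lie (e 2) (e 3) x) (e 3 x) *\<^sub>R e 3 x"
    unfolding sum_lt4 using z by (simp add: eps_def One_nat_def)
  finally show ?thesis .
qed

lemma gm_H: "gm G x (e d x) (Hvec G e x) = (1/2) * ((- cc 0 0 2 + cc 1 1 2) * gm G x (e d x) (e 2 x)
   + (- cc 0 0 3 + cc 1 1 3) * gm G x (e d x) (e 3 x))"
  unfolding Hvec_def cc_def by (simp add: gm_scale_right gm_add_right)

lemma gm_Ht: "gm G x (e d x) (Htvec G e x) = (1/2) * ((- cc 2 2 0 - cc 3 3 0) * gm G x (e d x) (e 0 x)
   + (cc 2 2 1 + cc 3 3 1) * gm G x (e d x) (e 1 x))"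
  unfolding Htvec_def cc_def by (simp add: gm_scale_right gm_add_right)

lemma div_cc: "divg (e b) = (\<Sum>a<4. eps a * cc a b a)"
  unfolding div_frame cc_def ..

end

context pt begin

lemma form2_F: "form2 (\<lambda>x. u x *\<^sub>R wedge (flat G A) (flat G B) x) x X Y
   = u x * (al (flat G A) X * al (flat G B) Y - al (flat G A) Y * al (flat G B) X)"
proof -
  have "form2 (\<lambda>x. u x *\<^sub>R wedge (flat G A) (flat G B) x) x X Y
     = u x * ((\<Sum>i\<in>UNIV. \<Sum>j\<in>UNIV. (flat G A x $ i * X $ i) * (flat G B x $ j * Y $ j))
            - (\<Sum>i\<in>UNIV. \<Sum>j\<in>UNIV. (flat G B x $ i * X $ i) * (flat G A x $ j * Y $ j)))"
    unfolding form2_def wedge_def by (simp add: sum_distrib_left sum_subtractf[symmetric] algebra_simps)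
  also have "\<dots> = u x * (al (flat G A) X * al (flat G B) Y - al (flat G A) Y * al (flat G B) X)"
    unfolding al_def by (simp add: sum_product[symmetric])
  finally show ?thesis .
qed

lemma inv_sq_frame:
  assumes "p < 4" "q < 4"
  shows "inv_sq G (\<lambda>x. u x *\<^sub>R wedge (flat G (e p)) (flat G (e q)) x) x
   = 2 * (u x)^2 * (gm G x (e p x) (e p x) * gm G x (e q x) (e q x) - gm G x (e q x) (e p x) * gm G x (e p x) (e q x))"
proof -
  let ?a = "flat G (e p) x" and ?b = "flat G (e q) x" and ?A = "e p x" and ?B = "e q x"
  have "inv_sq G (\<lambda>x. u x *\<^sub>R wedge (flat G (e p)) (flat G (e q)) x) x
     = (\<Sum>m\<in>UNIV. \<Sum>n\<in>UNIV. u x * (?a $ m * ?b $ n - ?a $ n * ?b $ m) * (u x * (?A $ m * ?B $ n - ?B $ m * ?A $ n)))"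
    unfolding inv_sq_def raise_F[OF xU] by (simp add: wedge_def)
  also have "\<dots> = (u x)^2 * ((\<Sum>m\<in>UNIV. \<Sum>n\<in>UNIV. (?a $ m * ?A $ m) * (?b $ n * ?B $ n))
      - (\<Sum>m\<in>UNIV. \<Sum>n\<in>UNIV. (?a $ m * ?B $ m) * (?b $ n * ?A $ n))
      - (\<Sum>m\<in>UNIV. \<Sum>n\<in>UNIV. (?b $ m * ?A $ m) * (?a $ n * ?B $ n))
      + (\<Sum>m\<in>UNIV. \<Sum>n\<in>UNIV. (?b $ m * ?B $ m) * (?a $ n * ?A $ n)))"
    by (simp add: sum_distrib_left sum_subtractf[symmetric] sum.distrib[symmetric] power2_eq_square algebra_simps)
  also have "\<dots> = (u x)^2 * (al (flat G (e p)) ?A * al (flat G (e q)) ?B - al (flat G (e p)) ?B * al (flat G (e q)) ?A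
      - al (flat G (e q)) ?A * al (flat G (e p)) ?B + al (flat G (e q)) ?B * al (flat G (e p)) ?A)"
    unfolding al_def by (simp add: sum_product[symmetric])
  also have "\<dots> = 2 * (u x)^2 * (gm G x ?A ?A * gm G x ?B ?B - gm G x ?B ?A * gm G x ?A ?B)"
    unfolding al_flat by (simp add: algebra_simps)
  finally show ?thesis .
qed

lemma raise_scale: "raise2 G (\<lambda>x. u x *\<^sub>R W x) y = u y *\<^sub>R raise2 G W y"
  unfolding raise2_def by (simp add: vec_eq_iff sum_distrib_left mult_ac)

lemma hodge_scale: "hodge G s (\<lambda>x. u x *\<^sub>R W x) y = u y *\<^sub>R hodge G s W y"
  unfolding hodge_def raise_scale by (simp add: vec_eq_iff sum_distrib_left mult_ac)

lemma kernel_M: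
  assumes unz: "u x \<noteq> 0"
  shows "{X. \<forall>Y. form2 (\<lambda>x. u x *\<^sub>R wedge (flat G (e 2)) (flat G (e 3)) x) x X Y = 0} = span {e 0 x, e 1 x}"
proof
  show "{X. \<forall>Y. form2 (\<lambda>x. u x *\<^sub>R wedge (flat G (e 2)) (flat G (e 3)) x) x X Y = 0} \<subseteq> span {e 0 x, e 1 x}"
  proof
    fix X assume "X \<in> {X. \<forall>Y. form2 (\<lambda>x. u x *\<^sub>R wedge (flat G (e 2)) (flat G (e 3)) x) x X Y = 0}"
    then have f: "\<And>Y. u x * (gm G x X (e 2 x) * gm G x Y (e 3 x) - gm G x Y (e 2 x) * gm G x X (e 3 x)) = 0"
      unfolding form2_F al_flat by blast
    have z2: "gm G x X (e 2 x) = 0" using f[of "e 3 x"] unz by (simp add: orth)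
    have z3: "gm G x X (e 3 x) = 0" using f[of "e 2 x"] unz by (simp add: orth)
    have "X = (\<Sum>a<4. (eps a * gm G x X (e a x)) *\<^sub>R e a x)" by (rule complete)
    also have "\<dots> = (- gm G x X (e 0 x)) *\<^sub>R e 0 x + gm G x X (e 1 x) *\<^sub>R e 1 x"
      unfolding sum_lt4 using z2 z3 by (simp add: eps_def One_nat_def)
    also have "\<dots> \<in> span {e 0 x, e 1 x}"
      by (intro span_add span_mul span_base) auto
    finally show "X \<in> span {e 0 x, e 1 x}" .
  qed
next
  show "span {e 0 x, e 1 x} \<subseteq> {X. \<forall>Y. form2 (\<lambda>x. u x *\<^sub>R wedge (flat G (e 2)) (flat G (e 3)) x) x X Y = 0}"
  proof
    fix X assume X: "X \<in> span {e 0 x, e 1 x}"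
    have "gm G x X (e 2 x) = 0" "gm G x X (e 3 x) = 0" using span_orth[OF X] by auto
    then show "X \<in> {X. \<forall>Y. form2 (\<lambda>x. u x *\<^sub>R wedge (flat G (e 2)) (flat G (e 3)) x) x X Y = 0}"
      unfolding form2_F al_flat by simp
  qed
qed

end

locale pt2 = pt +
  fixes u :: "real^4 \<Rightarrow> real"
  assumes usm: "smooth4_on U u" and unz: "u x \<noteq> 0"
    and hln: "\<forall>i. pd i (\<lambda>y. ln \<bar>u y\<bar>) x = 2 * flat G (\<lambda>y. Hvec G e y + Htvec G e y) x $ i"
begin

lemma udiff: "u differentiable at x" using smooth_diff_at[OF usm op xU] .

lemma pd_u: "pd i u x = 2 * u x * flat G (\<lambda>y. Hvec G e y + Htvec G e y) x $ i"
  using pd_ln_abs[OF udiff unz, of i] hln unz by (simp add: field_simps)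

lemma dirx_u: "dirx (e d) u = 2 * u x * (gm G x (e d x) (Hvec G e x) + gm G x (e d x) (Htvec G e x))"
proof -
  have "dirx (e d) u = 2 * u x * gm G x (e d x) (Hvec G e x + Htvec G e x)"
    unfolding dirx_def pd_u flat_def gm_def by (simp add: sum_distrib_left mult_ac)
  then show ?thesis by (simp add: gm_add_right)
qed

lemma ed0: "(\<lambda>y. e 0 y $ j) differentiable at x" using ediff by simp
lemma ed1: "(\<lambda>y. e 1 y $ j) differentiable at x" using ediff by simp
lemma ed2: "(\<lambda>y. e 2 y $ j) differentiable at x" using ediff by simp
lemma ed3: "(\<lambda>y. e 3 y $ j) differentiable at x" using ediff by simp

lemmas simps_fr = dirx_u gm_H gm_Ht orth div_cc sum_lt4 eps_def lie_cc cc_self cc_ord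

lemma vac_E:
  assumes inv: "lie (e 0) (e 1) x \<in> span {e 0 x, e 1 x}"
  shows "current G (\<lambda>x. u x *\<^sub>R wedge (flat G (e 0)) (flat G (e 1)) x) x = 0"
proof -
  have cf: "current G (\<lambda>x. u x *\<^sub>R wedge (flat G (e 0)) (flat G (e 1)) x) x
    = - ((dirx (e 0) u + u x * divg (e 0)) *\<^sub>R e 1 x - (dirx (e 1) u + u x * divg (e 1)) *\<^sub>R e 0 x
     + u x *\<^sub>R lie (e 0) (e 1) x)"
    by (rule current_formula[OF udiff ed0 ed1]) (rule raise_F)
  have c1: "dirx (e 0) u + u x * divg (e 0) + u x * gm G x (lie (e 0) (e 1) x) (e 1 x) = 0"
    by (simp add: simps_fr algebra_simps)
  have c0: "dirx (e 1) u + u x * divg (e 1) + u x * gm G x (lie (e 0) (e 1) x) (e 0 x) = 0"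
    by (simp add: simps_fr algebra_simps)
  define L0 where "L0 = gm G x (lie (e 0) (e 1) x) (e 0 x)"
  define L1 where "L1 = gm G x (lie (e 0) (e 1) x) (e 1 x)"
  have "(dirx (e 0) u + u x * divg (e 0)) *\<^sub>R e 1 x - (dirx (e 1) u + u x * divg (e 1)) *\<^sub>R e 0 x
     + u x *\<^sub>R ((- L0) *\<^sub>R e 0 x + L1 *\<^sub>R e 1 x)
     = (dirx (e 0) u + u x * divg (e 0) + u x * L1) *\<^sub>R e 1 x - (dirx (e 1) u + u x * divg (e 1) + u x * L0) *\<^sub>R e 0 x"
    by (simp add: algebra_simps)
  also have "\<dots> = 0" using c0 c1 unfolding L0_def L1_def by simp
  finally show ?thesis unfolding cf using lie01_exp[OF inv] L0_def L1_def by simp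
qed

lemma vac_M:
  assumes inv: "lie (e 2) (e 3) x \<in> span {e 2 x, e 3 x}"
  shows "current G (\<lambda>x. u x *\<^sub>R wedge (flat G (e 2)) (flat G (e 3)) x) x = 0"
proof -
  have cf: "current G (\<lambda>x. u x *\<^sub>R wedge (flat G (e 2)) (flat G (e 3)) x) x
    = - ((dirx (e 2) u + u x * divg (e 2)) *\<^sub>R e 3 x - (dirx (e 3) u + u x * divg (e 3)) *\<^sub>R e 2 x
     + u x *\<^sub>R lie (e 2) (e 3) x)"
    by (rule current_formula[OF udiff ed2 ed3]) (rule raise_F)
  have c3: "dirx (e 2) u + u x * divg (e 2) + u x * gm G x (lie (e 2) (e 3) x) (e 3 x) = 0"
    by (simp add: simps_fr algebra_simps)
  have c2: "dirx (e 3) u + u x * divg (e 3) - u x * gm G x (lie (e 2) (e 3) x) (e 2 x) = 0"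
    by (simp add: simps_fr algebra_simps)
  define L2 where "L2 = gm G x (lie (e 2) (e 3) x) (e 2 x)"
  define L3 where "L3 = gm G x (lie (e 2) (e 3) x) (e 3 x)"
  have "(dirx (e 2) u + u x * divg (e 2)) *\<^sub>R e 3 x - (dirx (e 3) u + u x * divg (e 3)) *\<^sub>R e 2 x
     + u x *\<^sub>R (L2 *\<^sub>R e 2 x + L3 *\<^sub>R e 3 x)
     = (dirx (e 2) u + u x * divg (e 2) + u x * L3) *\<^sub>R e 3 x - (dirx (e 3) u + u x * divg (e 3) - u x * L2) *\<^sub>R e 2 x"
    by (simp add: algebra_simps)
  also have "\<dots> = 0" using c2 c3 unfolding L2_def L3_def by simp
  finally show ?thesis unfolding cf using lie23_exp[OF inv] L2_def L3_def by simp
qed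

lemma vd_rel: "q < p \<Longrightarrow> gm G x (vd p q) (e s x) = gm G x (vd q p) (e s x) - (cc q p s - cc p q s)"
proof -
  have "gm G x (lie (e q) (e p) x) (e s x) = gm G x (vd q p) (e s x) - gm G x (vd p q) (e s x)"
    unfolding lie_vd by (rule gm_diff_left)
  then show ?thesis using lie_cc[of q p s] by simp
qed

lemma all_lt4: "(\<forall>p<(4::nat). P p) \<longleftrightarrow> P 0 \<and> P 1 \<and> P 2 \<and> P 3"
  using lt4_cases by auto

lemma dv_dirx: "dv (e p x) f = dirx (e p) f"
  unfolding dv_def dirx_def ..

lemma closed_M:
  assumes inv: "lie (e 0) (e 1) x \<in> span {e 0 x, e 1 x}"
  shows "pd i (\<lambda>y. u y * (flat G (e 2) y $ j * flat G (e 3) y $ k - flat G (e 2) y $ k * flat G (e 3) y $ j)) x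
     + pd j (\<lambda>y. u y * (flat G (e 2) y $ k * flat G (e 3) y $ i - flat G (e 2) y $ i * flat G (e 3) y $ k)) x
     + pd k (\<lambda>y. u y * (flat G (e 2) y $ i * flat G (e 3) y $ j - flat G (e 2) y $ j * flat G (e 3) y $ i)) x = 0"
proof -
  define P where "P i j k = pd i (\<lambda>y. u y * (flat G (e 2) y $ j * flat G (e 3) y $ k - flat G (e 2) y $ k * flat G (e 3) y $ j)) x" for i j k
  have z2: "cc 1 0 2 = cc 0 1 2" using span_orth[OF inv, of 2] lie_cc[of 0 1 2] by simp
  have z3: "cc 1 0 3 = cc 0 1 3" using span_orth[OF inv, of 3] lie_cc[of 0 1 3] by simp
  have da: "\<And>j. (\<lambda>y. flat G (e 2) y $ j) differentiable at x" using flat_diff by simp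
  have db: "\<And>j. (\<lambda>y. flat G (e 3) y $ j) differentiable at x" using flat_diff by simp
  define PF where "PF p q r = dv (e p x) u * (gm G x (e q x) (e 2 x) * gm G x (e r x) (e 3 x) - gm G x (e r x) (e 2 x) * gm G x (e q x) (e 3 x))
     + u x * (- gm G x (vd p q) (e 2 x) * gm G x (e r x) (e 3 x) - gm G x (e q x) (e 2 x) * gm G x (vd p r) (e 3 x)
        + gm G x (vd p r) (e 2 x) * gm G x (e q x) (e 3 x) + gm G x (e r x) (e 2 x) * gm G x (vd p q) (e 3 x))" for p q r
  have Pf: "(\<Sum>i\<in>UNIV. \<Sum>j\<in>UNIV. \<Sum>k\<in>UNIV. P i j k * e p x $ i * e q x $ j * e r x $ k) = PF p q r"
    if "p < 4" "q < 4" "r < 4" for p q r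
    unfolding P_def Pf_formula[OF udiff da db] al_flat PF_def
    by (simp add: Dd_frame that algebra_simps)
  have PF0: "\<forall>p<4. \<forall>q<4. \<forall>r<4. PF p q r + PF q r p + PF r p q = 0"
    unfolding all_lt4 PF_def using z2 z3 by (simp add: dv_dirx simps_fr vd_rel algebra_simps One_nat_def)
  have "\<forall>p<4. \<forall>q<4. \<forall>r<4. (\<Sum>i\<in>UNIV. \<Sum>j\<in>UNIV. \<Sum>k\<in>UNIV. (P i j k + P j k i + P k i j) * e p x $ i * e q x $ j * e r x $ k) = 0"
  proof (intro allI impI)
    fix p q r :: nat assume pqr: "p < 4" "q < 4" "r < 4"
    show "(\<Sum>i\<in>UNIV. \<Sum>j\<in>UNIV. \<Sum>k\<in>UNIV. (P i j k + P j k i + P k i j) * e p x $ i * e q x $ j * e r x $ k) = 0"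
      unfolding cyc_sum Pf[OF pqr] Pf[OF pqr(2,3,1)] Pf[OF pqr(3,1,2)] using PF0 pqr by blast
  qed
  then have "P i j k + P j k i + P k i j = 0"
    by (intro tri_zero[where T="\<lambda>i j k. P i j k + P j k i + P k i j"]) blast
  then show ?thesis unfolding P_def .
qed

end

theorem theorem6:
  fixes G :: tfield and U :: "(real^4) set" and p :: "real^4"
    and e :: "nat \<Rightarrow> vfield" and u :: "real^4 \<Rightarrow> real"
  assumes "metric_on U G"
    and "open U" and "starlike U" and "p \<in> U"
    and "riem_fol_adapted_frame_on G U e"
    and "\<forall>x\<in>U. d1 (flat G (Hvec G e)) x = - d1 (flat G (Htvec G e)) x"
    and "smooth4_on U u"
    and "em_field_on U (\<lambda>x. u x *\<^sub>R wedge (flat G (e 0)) (flat G (e 1)) x)"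
    and "force_free_on G U (\<lambda>x. u x *\<^sub>R wedge (flat G (e 0)) (flat G (e 1)) x)"
    and "electrically_dominated_on G U (\<lambda>x. u x *\<^sub>R wedge (flat G (e 0)) (flat G (e 1)) x)"
    and "\<forall>x\<in>U. \<forall>i. pd i (\<lambda>y. ln \<bar>u y\<bar>) x = 2 * flat G (\<lambda>y. Hvec G e y + Htvec G e y) x $ i"
    and "involutive2_on U (e 0) (e 1)"
  shows "em_field_on U (\<lambda>x. u x *\<^sub>R wedge (flat G (e 2)) (flat G (e 3)) x)
    \<and> force_free_on G U (\<lambda>x. u x *\<^sub>R wedge (flat G (e 2)) (flat G (e 3)) x)
    \<and> magnetically_dominated_on G U (\<lambda>x. u x *\<^sub>R wedge (flat G (e 2)) (flat G (e 3)) x)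
    \<and> (\<forall>x\<in>U. {X. \<forall>Y. form2 (\<lambda>x. u x *\<^sub>R wedge (flat G (e 2)) (flat G (e 3)) x) x X Y = 0}
              = span {e 0 x, e 1 x})
    \<and> vacuum_on G U (\<lambda>x. u x *\<^sub>R wedge (flat G (e 0)) (flat G (e 1)) x)
    \<and> vacuum_on G U (\<lambda>x. u x *\<^sub>R wedge (flat G (e 2)) (flat G (e 3)) x)
    \<and> (\<forall>s\<in>{1, -1}.
         (\<forall>x\<in>U. hodge G s (wedge (flat G (e 0)) (flat G (e 1))) x
                  = - wedge (flat G (e 2)) (flat G (e 3)) x)
         \<longrightarrow> (\<forall>x\<in>U. hodge G s (\<lambda>x. u x *\<^sub>R wedge (flat G (e 0)) (flat G (e 1)) x) x
                  = - (u x *\<^sub>R wedge (flat G (e 2)) (flat G (e 3)) x)))"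
proof -
  note fr_all = assms(5)[unfolded riem_fol_adapted_frame_on_def]
  have fr: "orthonormal_frame_on G U e" using fr_all by blast
  have inv23: "\<And>x. x \<in> U \<Longrightarrow> lie (e 2) (e 3) x \<in> span {e 2 x, e 3 x}"
    using fr_all unfolding involutive2_on_def by blast
  have inv01: "\<And>x. x \<in> U \<Longrightarrow> lie (e 0) (e 1) x \<in> span {e 0 x, e 1 x}"
    using assms(12) unfolding involutive2_on_def by blast
  have ptx: "\<And>x. x \<in> U \<Longrightarrow> pt G U e x"
    using assms(1,2) fr by (unfold_locales) auto
  have unz: "u x \<noteq> 0" if x: "x \<in> U" for x
  proof
    assume u0: "u x = 0"
    have "inv_sq G (\<lambda>x. u x *\<^sub>R wedge (flat G (e 0)) (flat G (e 1)) x) x < 0"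
      using assms(10) x unfolding electrically_dominated_on_def by blast
    moreover have "inv_sq G (\<lambda>x. u x *\<^sub>R wedge (flat G (e 0)) (flat G (e 1)) x) x = 0"
      using pt.inv_sq_frame[OF ptx[OF x], of 0 1 u] u0 by simp
    ultimately show False by simp
  qed
  have pt2x: "\<And>x. x \<in> U \<Longrightarrow> pt2 G U e x u"
  proof -
    fix x assume x: "x \<in> U"
    show "pt2 G U e x u"
      by (rule pt2.intro[OF ptx[OF x]], unfold_locales) (use assms(7,11) unz x in auto)
  qed
  have FMc: "(\<lambda>y. (u y *\<^sub>R wedge (flat G (e 2)) (flat G (e 3)) y) $ j $ k)
     = (\<lambda>y. u y * (flat G (e 2) y $ j * flat G (e 3) y $ k - flat G (e 2) y $ k * flat G (e 3) y $ j))" for j k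
    by (simp add: wedge_def fun_eq_iff)
  have flat_sm: "smooth4_on U (\<lambda>y. flat G (e s) y $ i)" if "s < 4" for s i
  proof -
    have "smooth4_on U (\<lambda>y. \<Sum>l\<in>UNIV. G y $ i $ l * e s y $ l)"
      using assms(1,2) fr that unfolding metric_on_def smooth_tf_on_def orthonormal_frame_on_def smooth_vf_on_def
      by (intro smooth_sum smooth_mult) auto
    then show ?thesis unfolding flat_def by simp
  qed
  have em: "em_field_on U (\<lambda>x. u x *\<^sub>R wedge (flat G (e 2)) (flat G (e 3)) x)"
    unfolding em_field_on_def
  proof (intro conjI)
    show "smooth_tf_on U (\<lambda>x. u x *\<^sub>R wedge (flat G (e 2)) (flat G (e 3)) x)"
      unfolding smooth_tf_on_def FMc
      using assms(2,7) flat_sm by (intro allI smooth_mult smooth_diff) auto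
    show "\<forall>x\<in>U. \<forall>i j. (u x *\<^sub>R wedge (flat G (e 2)) (flat G (e 3)) x) $ i $ j = - (u x *\<^sub>R wedge (flat G (e 2)) (flat G (e 3)) x) $ j $ i"
      by (simp add: wedge_def algebra_simps)
    show "closed2_on U (\<lambda>x. u x *\<^sub>R wedge (flat G (e 2)) (flat G (e 3)) x)"
      unfolding closed2_on_def FMc using pt2.closed_M[OF pt2x inv01] by blast
  qed
  have vacM: "vacuum_on G U (\<lambda>x. u x *\<^sub>R wedge (flat G (e 2)) (flat G (e 3)) x)"
    unfolding vacuum_on_def using pt2.vac_M[OF pt2x inv23] by blast
  have vacE: "vacuum_on G U (\<lambda>x. u x *\<^sub>R wedge (flat G (e 0)) (flat G (e 1)) x)"
    unfolding vacuum_on_def using pt2.vac_E[OF pt2x inv01] by blast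
  have ff: "force_free_on G U (\<lambda>x. u x *\<^sub>R wedge (flat G (e 2)) (flat G (e 3)) x)"
    using vacM unfolding force_free_on_def vacuum_on_def form2_def by simp
  have md: "magnetically_dominated_on G U (\<lambda>x. u x *\<^sub>R wedge (flat G (e 2)) (flat G (e 3)) x)"
    unfolding magnetically_dominated_on_def
  proof
    fix x assume x: "x \<in> U"
    have "inv_sq G (\<lambda>x. u x *\<^sub>R wedge (flat G (e 2)) (flat G (e 3)) x) x = 2 * (u x)^2"
      using pt.inv_sq_frame[OF ptx[OF x], of 2 3 u] pt.orth[OF ptx[OF x]] by simp
    then show "inv_sq G (\<lambda>x. u x *\<^sub>R wedge (flat G (e 2)) (flat G (e 3)) x) x > 0"
      using unz[OF x] by simp
  qed
  have ker: "\<forall>x\<in>U. {X. \<forall>Y. form2 (\<lambda>x. u x *\<^sub>R wedge (flat G (e 2)) (flat G (e 3)) x) x X Y = 0}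
              = span {e 0 x, e 1 x}"
  proof
    fix x assume x: "x \<in> U"
    show "{X. \<forall>Y. form2 (\<lambda>x. u x *\<^sub>R wedge (flat G (e 2)) (flat G (e 3)) x) x X Y = 0} = span {e 0 x, e 1 x}"
      by (rule pt.kernel_M[where u=u, OF ptx[OF x] unz[OF x]])
  qed
  have hod: "\<forall>s\<in>{1, -1}.
         (\<forall>x\<in>U. hodge G s (wedge (flat G (e 0)) (flat G (e 1))) x
                  = - wedge (flat G (e 2)) (flat G (e 3)) x)
         \<longrightarrow> (\<forall>x\<in>U. hodge G s (\<lambda>x. u x *\<^sub>R wedge (flat G (e 0)) (flat G (e 1)) x) x
                  = - (u x *\<^sub>R wedge (flat G (e 2)) (flat G (e 3)) x))"
    using pt.hodge_scale[OF ptx[OF assms(4)]] by simp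
  show ?thesis using em ff md ker vacE vacM hod by blast
qed


end
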